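(* Let $H(\theta):=\{\mathbb E[Y^\alpha]:Y\in\arg\max_{Y\in\mathcal Y}\mathbb E[F(Y;\theta)]\}$, which for $\theta\neq\underline\theta$ is a singleton identified with its element. Then $\theta\mapsto H(\theta)$ is non-decreasing on $(\underline\theta,\infty)$, and $H(\theta)=0$ for $\theta<\underline\theta$.
   Context: Let $B$ be a one-dimensional standard Brownian motion on a complete probability space $(\Omega,\mathcal F,\mathbb P)$ with augmented natural filtration $(\mathcal F_t)$. Constants $\mu,r\in\mathbb R$, $\sigma>0$, $\phi:=(\mu-r)/\sigma\neq0$; pricing kernel $Z_t=\exp(-\phi B_t-(r+\phi^2/2)t)$. Fix $\tau>0$, $\alpha\in(0,1)$, $k\ge0$, $\gamma>0$. $U(x)=x^\alpha$ for $x\ge0$, $U(x)=-k|x|^\alpha$ for $x<0$. $\mathcal Y$ is the set of $\mathcal F_\tau$-measurable $Y\ge0$ with $\mathbb E[Z_\tau Y]\le1$. $F(y;\theta):=U(y-\gamma)+\theta y^\alpha$, $\underline\theta:=-(1+k^{1/(1-\alpha)})^{1-\alpha}$. For every $\theta$ the maximum of $\mathbb E[F(Y;\theta)]$ over $\mathcal Y$ is attained. *)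

theory Defs
  imports "HOL-Probability.Probability"
begin

text \<open>Standard one-dimensional Brownian motion B on the probability space M
  (time index t \<ge> 0; values at negative times are irrelevant).\<close>
definition std_brownian_motion :: "'a measure \<Rightarrow> (real \<Rightarrow> 'a \<Rightarrow> real) \<Rightarrow> bool" where
  "std_brownian_motion M B \<longleftrightarrow>
     prob_space M \<and>
     (\<forall>t\<ge>0. B t \<in> borel_measurable M) \<and>
     (\<forall>\<omega>\<in>space M. B 0 \<omega> = 0) \<and>
     (AE \<omega> in M. continuous_on {0..} (\<lambda>t. B t \<omega>)) \<and>
     (\<forall>s t. 0 \<le> s \<and> s < t \<longrightarrow>
        distributed M lborel (\<lambda>\<omega>. B t \<omega> - B s \<omega>) (normal_density 0 (sqrt (t - s)))) \<and>
     (\<forall>(n::nat) (ts::nat \<Rightarrow> real). 0 \<le> ts 0 \<and> (\<forall>i<n. ts i < ts (Suc i)) \<longrightarrow>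
        prob_space.indep_vars M (\<lambda>_. borel) (\<lambda>i \<omega>. B (ts (Suc i)) \<omega> - B (ts i) \<omega>) {..<n})"

definition aug_filtration :: "'a measure \<Rightarrow> (real \<Rightarrow> 'a \<Rightarrow> real) \<Rightarrow> real \<Rightarrow> 'a measure" where
  "aug_filtration M B t = sigma (space M)
     ({B s -` A \<inter> space M | s A. 0 \<le> s \<and> s \<le> t \<and> A \<in> sets borel} \<union> null_sets M)"

definition pricing_kernel :: "(real \<Rightarrow> 'a \<Rightarrow> real) \<Rightarrow> real \<Rightarrow> real \<Rightarrow> real \<Rightarrow> 'a \<Rightarrow> real" where
  "pricing_kernel B \<phi> r t \<omega> = exp (- \<phi> * B t \<omega> - (r + \<phi>\<^sup>2 / 2) * t)"

definition admissible :: "'a measure \<Rightarrow> (real \<Rightarrow> 'a \<Rightarrow> real) \<Rightarrow> real \<Rightarrow> real \<Rightarrow> real \<Rightarrow> ('a \<Rightarrow> real) set" where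
  "admissible M B \<phi> r \<tau> = {Y. Y \<in> borel_measurable (aug_filtration M B \<tau>) \<and>
      (\<forall>\<omega>\<in>space M. 0 \<le> Y \<omega>) \<and>
      (\<integral>\<^sup>+ \<omega>. ennreal (pricing_kernel B \<phi> r \<tau> \<omega> * Y \<omega>) \<partial>M) \<le> 1}"

definition U :: "real \<Rightarrow> real \<Rightarrow> real \<Rightarrow> real" where
  "U \<alpha> k x = (if 0 \<le> x then x powr \<alpha> else - k * \<bar>x\<bar> powr \<alpha>)"

definition Fobj :: "real \<Rightarrow> real \<Rightarrow> real \<Rightarrow> real \<Rightarrow> real \<Rightarrow> real" where
  "Fobj \<alpha> k \<gamma> \<theta> y = U \<alpha> k (y - \<gamma>) + \<theta> * y powr \<alpha>"

definition theta_low :: "real \<Rightarrow> real \<Rightarrow> real" where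
  "theta_low \<alpha> k = - ((1 + k powr (1 / (1 - \<alpha>))) powr (1 - \<alpha>))"

definition argmax_set :: "'a measure \<Rightarrow> (real \<Rightarrow> 'a \<Rightarrow> real) \<Rightarrow> real \<Rightarrow> real \<Rightarrow> real
    \<Rightarrow> real \<Rightarrow> real \<Rightarrow> real \<Rightarrow> real \<Rightarrow> ('a \<Rightarrow> real) set" where
  "argmax_set M B \<phi> r \<tau> \<alpha> k \<gamma> \<theta> =
     {Y \<in> admissible M B \<phi> r \<tau>. \<forall>Y' \<in> admissible M B \<phi> r \<tau>.
        (\<integral>\<omega>. Fobj \<alpha> k \<gamma> \<theta> (Y' \<omega>) \<partial>M) \<le> (\<integral>\<omega>. Fobj \<alpha> k \<gamma> \<theta> (Y \<omega>) \<partial>M)}"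

definition Hset :: "'a measure \<Rightarrow> (real \<Rightarrow> 'a \<Rightarrow> real) \<Rightarrow> real \<Rightarrow> real \<Rightarrow> real
    \<Rightarrow> real \<Rightarrow> real \<Rightarrow> real \<Rightarrow> real \<Rightarrow> real set" where
  "Hset M B \<phi> r \<tau> \<alpha> k \<gamma> \<theta> =
     (\<lambda>Y. \<integral>\<omega>. Y \<omega> powr \<alpha> \<partial>M) ` argmax_set M B \<phi> r \<tau> \<alpha> k \<gamma> \<theta>"

end

theory Submission
  imports Defs
begin
lemma tangent_powr:
  fixes a u x :: real
  assumes "0<a" "a<1" "0<u" "0\<le>x"
  shows "x powr a \<le> a * u powr (a-1) * x + (1-a) * u powr a"
proof (cases "x=0")
  case True
  then show ?thesis using assms by simp
next
  case False
  then have x: "x > 0" using assms by simp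
  have "(x/u) powr a * 1 powr (1-a) \<le> a*(x/u) + (1-a)*1"
    by (rule Youngs_inequality_0) (use assms x in auto)
  then have "(x/u) powr a * u powr a \<le> (a*(x/u) + (1-a)) * u powr a"
    by (intro mult_right_mono) auto
  moreover have "(x/u) powr a * u powr a = x powr a"
    using assms x by (simp add: powr_divide)
  moreover have "(a*(x/u) + (1-a)) * u powr a = a * u powr (a-1) * x + (1-a) * u powr a"
    using assms by (simp add: powr_diff field_simps)
  ultimately show ?thesis by simp
qed

lemma powr_subadd:
  fixes a x y :: real
  assumes "0<a" "a\<le>1" "0\<le>x" "0\<le>y"
  shows "(x+y) powr a \<le> x powr a + y powr a"
proof (cases "x+y = 0")
  case True then show ?thesis using assms by simp
next
  case False
  then have s: "x + y > 0" using assms by simp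
  have "x/(x+y) \<le> (x/(x+y)) powr a"
    using powr_mono'[of a 1 "x/(x+y)"] assms s by (simp add: divide_le_eq_1)
  moreover have "y/(x+y) \<le> (y/(x+y)) powr a"
    using powr_mono'[of a 1 "y/(x+y)"] assms s by (simp add: divide_le_eq_1)
  moreover have "x/(x+y) + y/(x+y) = 1"
    using s by (simp add: add_divide_distrib[symmetric])
  ultimately have "1 \<le> (x/(x+y)) powr a + (y/(x+y)) powr a"
    by linarith
  then have "(x+y) powr a * 1 \<le> (x+y) powr a * ((x/(x+y)) powr a + (y/(x+y)) powr a)"
    by (intro mult_left_mono) auto
  also have "\<dots> = x powr a + y powr a"
    using s assms by (simp add: powr_divide distrib_left)
  finally show ?thesis by simp
qed

lemma powr_le_iff_base:
  fixes a x y :: real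
  assumes "0 < a" "0 \<le> x" "0 \<le> y"
  shows "x powr a \<le> y powr a \<longleftrightarrow> x \<le> y"
  using assms powr_mono2[of a x y] powr_less_mono2[of a y x] by (cases "x \<le> y") auto

locale ptw =
  fixes F :: "real \<Rightarrow> real" and \<alpha> C :: real
  assumes alpha: "0<\<alpha>" "\<alpha><1" and Cpos: "C>0"
  and contF: "continuous_on UNIV F"
  and growth: "\<And>y. 0 \<le> y \<Longrightarrow> F y \<le> F 0 + C * y powr \<alpha>"
begin

definition argm :: "real \<Rightarrow> real set" where
  "argm t = {y. 0 \<le> y \<and> (\<forall>x\<ge>0. F x - t*x \<le> F y - t*y)}"
definition bnd :: "real \<Rightarrow> real" where "bnd t = (C/t) powr (1/(1-\<alpha>))"
definition Ymax :: "real \<Rightarrow> real" where "Ymax t = Sup (argm t)"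
definition Ymin :: "real \<Rightarrow> real" where "Ymin t = Inf (argm t)"
definition Psi :: "real \<Rightarrow> real" where "Psi t = F (Ymax t) - t * Ymax t"

lemma bnd_pos: "t > 0 \<Longrightarrow> bnd t > 0"
  using Cpos by (simp add: bnd_def)

lemma small_ratio:
  assumes "t > 0" "y > 0"
  shows "t * y \<le> C * y powr \<alpha> \<longleftrightarrow> y \<le> bnd t"
proof -
  have "y = y powr (1-\<alpha>) * y powr \<alpha>" using assms by (simp add: powr_add[symmetric])
  then have "t * y \<le> C * y powr \<alpha> \<longleftrightarrow> t * y powr (1-\<alpha>) * y powr \<alpha> \<le> C * y powr \<alpha>"
    by (metis mult.assoc)
  also have "\<dots> \<longleftrightarrow> t * y powr (1-\<alpha>) \<le> C"
    using assms by (simp add: mult_le_cancel_right)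
  also have "\<dots> \<longleftrightarrow> y powr (1-\<alpha>) \<le> C / t"
    using assms by (simp add: pos_le_divide_eq mult.commute)
  also have "\<dots> \<longleftrightarrow> (y powr (1-\<alpha>)) powr (1/(1-\<alpha>)) \<le> (C/t) powr (1/(1-\<alpha>))"
    using assms alpha Cpos powr_le_iff_base[of "1/(1-\<alpha>)" "y powr (1-\<alpha>)" "C/t"] by auto
  also have "(y powr (1-\<alpha>)) powr (1/(1-\<alpha>)) = y"
    using assms alpha by (simp add: powr_powr)
  finally show ?thesis by (simp add: bnd_def)
qed

lemma argm_bound:
  assumes "t > 0" "y \<in> argm t"
  shows "y \<le> bnd t"
proof (cases "y = 0")
  case True then show ?thesis using bnd_pos[OF assms(1)] by simp
next
  case False
  with assms have y: "y > 0" and "F 0 - t*0 \<le> F y - t*y" by (auto simp: argm_def)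
  then have "t * y \<le> C * y powr \<alpha>" using growth[of y] by auto
  then show ?thesis using small_ratio[OF assms(1) y] by simp
qed

lemma argm_nonempty:
  assumes t: "t > 0"
  shows "argm t \<noteq> {}"
proof -
  let ?G = "\<lambda>y. F y - t*y"
  have "continuous_on {0..bnd t} ?G"
    by (intro continuous_intros continuous_on_subset[OF contF]) auto
  then obtain y0 where y0: "y0 \<in> {0..bnd t}" "\<And>y. y \<in> {0..bnd t} \<Longrightarrow> ?G y \<le> ?G y0"
    using continuous_attains_sup[of "{0..bnd t}" ?G] bnd_pos[OF t] by auto
  have "y0 \<in> argm t"
    unfolding argm_def
  proof (intro CollectI conjI allI impI)
    show "0 \<le> y0" using y0 by auto
    fix x :: real assume x: "0 \<le> x"
    show "?G x \<le> ?G y0"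
    proof (cases "x \<le> bnd t")
      case True then show ?thesis using y0 x by auto
    next
      case False
      then have xp: "x > 0" using bnd_pos[OF t] by auto
      have "\<not> t * x \<le> C * x powr \<alpha>" using small_ratio[OF t xp] False by simp
      then have "?G x < F 0" using growth[OF x] by auto
      also have "F 0 = ?G 0" by simp
      also have "\<dots> \<le> ?G y0" using y0(2)[of 0] bnd_pos[OF t] by auto
      finally show ?thesis by simp
    qed
  qed
  then show ?thesis by auto
qed

lemma argm_closed: "closed (argm t)"
proof -
  have "argm t = {0..} \<inter> (\<Inter>x\<in>{0..}. {y. F x - t*x \<le> F y - t*y})"
    unfolding argm_def by auto
  also have "closed \<dots>"
  proof -
    have cG: "continuous_on UNIV (\<lambda>y. F y - t*y)"
      by (intro continuous_on_diff contF continuous_on_mult continuous_on_const continuous_on_id)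
    have "closed {y. F x - t*x \<le> F y - t*y}" for x
      by (rule closed_Collect_le[OF continuous_on_const cG])
    then show ?thesis by (intro closed_Int closed_INT) (auto simp: closed_atLeast)
  qed
  finally show ?thesis .
qed

lemma argm_bdd: "t > 0 \<Longrightarrow> bdd_above (argm t)"
  using argm_bound by (auto simp: bdd_above_def)

lemma argm_bdd_below: "bdd_below (argm t)"
  by (auto simp: bdd_below_def argm_def)

lemma Ymax_in: "t > 0 \<Longrightarrow> Ymax t \<in> argm t"
  unfolding Ymax_def by (intro closed_contains_Sup argm_nonempty argm_bdd argm_closed)

lemma Ymin_in: "t > 0 \<Longrightarrow> Ymin t \<in> argm t"
  unfolding Ymin_def by (intro closed_contains_Inf argm_nonempty argm_bdd_below argm_closed)

lemma Ymax_ge: "t > 0 \<Longrightarrow> y \<in> argm t \<Longrightarrow> y \<le> Ymax t"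
  unfolding Ymax_def by (intro cSup_upper argm_bdd)

lemma Ymin_le: "y \<in> argm t \<Longrightarrow> Ymin t \<le> y"
  unfolding Ymin_def by (intro cInf_lower argm_bdd_below)

lemma Ymax_nonneg: "t > 0 \<Longrightarrow> 0 \<le> Ymax t"
  using Ymax_in by (auto simp: argm_def)

lemma Ymax_le_bnd: "t > 0 \<Longrightarrow> Ymax t \<le> bnd t"
  using Ymax_in argm_bound by auto

lemma comp_stat:
  assumes "s < t" "y \<in> argm s" "z \<in> argm t"
  shows "z \<le> y"
proof -
  have "F z - s*z \<le> F y - s*y" "F y - t*y \<le> F z - t*z"
    using assms by (auto simp: argm_def)
  then have "(t - s) * (z - y) \<le> 0" by (simp add: algebra_simps)
  then show ?thesis using assms(1) by (simp add: mult_le_0_iff)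
qed

lemma Ymax_anti: "0 < s \<Longrightarrow> s < t \<Longrightarrow> Ymax t \<le> Ymin s"
  using comp_stat[of s t "Ymin s" "Ymax t"] Ymin_in Ymax_in by auto

lemma Ymax_anti': "0 < s \<Longrightarrow> s \<le> t \<Longrightarrow> Ymax t \<le> Ymax s"
  using Ymax_anti[of s t] Ymin_le[OF Ymax_in[of s]] by (cases "s = t") auto

lemma Psi_ge: "t > 0 \<Longrightarrow> 0 \<le> x \<Longrightarrow> F x - t*x \<le> Psi t"
  using Ymax_in[of t] by (auto simp: argm_def Psi_def)

lemma argm_iff: "t > 0 \<Longrightarrow> 0 \<le> y \<Longrightarrow> Psi t \<le> F y - t*y \<Longrightarrow> y \<in> argm t"
  using Psi_ge[of t] by (force simp: argm_def)

definition Ties :: "real set" where "Ties = {t. t > 0 \<and> Ymin t < Ymax t}"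

lemma countable_Ties: "countable Ties"
proof -
  have ex: "\<exists>q\<in>\<rat>. Ymin t < q \<and> q < Ymax t" if "t \<in> Ties" for t
  proof -
    have "Ymin t < Ymax t" using that by (simp add: Ties_def)
    from Rats_dense_in_real[OF this] show ?thesis by blast
  qed
  define q where "q t = (SOME q. q \<in> \<rat> \<and> Ymin t < q \<and> q < Ymax t)" for t
  have q: "q t \<in> \<rat> \<and> Ymin t < q t \<and> q t < Ymax t" if "t \<in> Ties" for t
    unfolding q_def using someI_ex[OF ex[OF that, unfolded Bex_def]] .
  have "inj_on q Ties"
  proof (rule inj_onI)
    fix s t assume st: "s \<in> Ties" "t \<in> Ties" "q s = q t"
    show "s = t"
    proof (rule ccontr)
      assume "s \<noteq> t"
      then consider "s < t" | "t < s" by linarith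
      then show False
      proof cases
        case 1
        then have "Ymax t \<le> Ymin s" using Ymax_anti st by (auto simp: Ties_def)
        then show False using q[OF st(1)] q[OF st(2)] st(3) by auto
      next
        case 2
        then have "Ymax s \<le> Ymin t" using Ymax_anti st by (auto simp: Ties_def)
        then show False using q[OF st(1)] q[OF st(2)] st(3) by auto
      qed
    qed
  qed
  moreover have "q ` Ties \<subseteq> \<rat>"
    using q by blast
  then have "countable (q ` Ties)"
    using countable_rat by (rule countable_subset)
  ultimately show ?thesis using countable_image_inj_on by blast
qed

lemma unique_argm: "t > 0 \<Longrightarrow> t \<notin> Ties \<Longrightarrow> y \<in> argm t \<Longrightarrow> y = Ymax t"
  using Ymax_ge[of t y] Ymin_le[of y t] by (force simp: Ties_def)

lemma argm_limit:
  assumes t: "t > 0" and tn: "\<And>n. s n > 0" "s \<longlonglongrightarrow> t"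
    and yn: "\<And>n. y n \<in> argm (s n)" "y \<longlonglongrightarrow> yl"
  shows "yl \<in> argm t"
  unfolding argm_def
proof (intro CollectI conjI allI impI)
  show "0 \<le> yl" using yn by (intro LIMSEQ_le_const[OF yn(2)]) (auto simp: argm_def)
  fix x :: real assume x: "0 \<le> x"
  have "F x - s n * x \<le> F (y n) - s n * y n" for n using yn(1)[of n] x by (auto simp: argm_def)
  moreover have "(\<lambda>n. F x - s n * x) \<longlonglongrightarrow> F x - t * x"
    by (intro tendsto_diff tendsto_const tendsto_mult tn(2))
  moreover have "(\<lambda>n. F (y n)) \<longlonglongrightarrow> F yl"
    using isCont_tendsto_compose[OF _ yn(2), of F] contF by (simp add: continuous_on_eq_continuous_at)
  then have "(\<lambda>n. F (y n) - s n * y n) \<longlonglongrightarrow> F yl - t * yl"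
    by (intro tendsto_diff tendsto_mult tn(2) yn(2))
  ultimately show "F x - t * x \<le> F yl - t * yl"
    by (intro LIMSEQ_le) auto
qed

lemma Ymax_left:
  assumes t: "t > 0" and s: "\<And>n. 0 < s n" "\<And>n. s n \<le> t" "incseq s" "s \<longlonglongrightarrow> t"
  shows "(\<lambda>n. Ymax (s n)) \<longlonglongrightarrow> Ymax t"
proof -
  let ?X = "\<lambda>n. Ymax (s n)"
  have dec: "decseq ?X"
    using s by (auto simp: decseq_def incseq_def intro!: Ymax_anti')
  have lb: "\<And>n. Ymax t \<le> ?X n" using s by (intro Ymax_anti') auto
  then have bdd: "bdd_below (range ?X)" by (auto simp: bdd_below_def)
  have lim: "?X \<longlonglongrightarrow> (INF i. ?X i)" by (rule LIMSEQ_decseq_INF[OF bdd dec])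
  have "(INF i. ?X i) \<in> argm t"
    by (rule argm_limit[OF t s(1) s(4) Ymax_in[OF s(1)] lim])
  then have "(INF i. ?X i) \<le> Ymax t" by (rule Ymax_ge[OF t])
  moreover have "Ymax t \<le> (INF i. ?X i)" using lb by (intro LIMSEQ_le_const[OF lim]) auto
  ultimately show ?thesis using lim by simp
qed

lemma Ymax_right:
  assumes t: "t > 0" "t \<notin> Ties" and s: "\<And>n. t \<le> s n" "decseq s" "s \<longlonglongrightarrow> t"
  shows "(\<lambda>n. Ymax (s n)) \<longlonglongrightarrow> Ymax t"
proof -
  let ?X = "\<lambda>n. Ymax (s n)"
  have sp: "\<And>n. 0 < s n" using s t by (meson less_le_trans)
  have inc: "incseq ?X"
    using s sp by (auto simp: decseq_def incseq_def intro!: Ymax_anti')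
  have ub: "\<And>n. ?X n \<le> Ymax t" using s t by (intro Ymax_anti') auto
  then have bdd: "bdd_above (range ?X)" by (auto simp: bdd_above_def)
  have lim: "?X \<longlonglongrightarrow> (SUP i. ?X i)" by (rule LIMSEQ_incseq_SUP[OF bdd inc])
  have "(SUP i. ?X i) \<in> argm t"
    by (rule argm_limit[OF t(1) sp s(3) Ymax_in[OF sp] lim])
  then have "(SUP i. ?X i) = Ymax t" by (rule unique_argm[OF t])
  then show ?thesis using lim by simp
qed

lemma Ymax_meas_aux: "(\<lambda>x. Ymax (exp x)) \<in> borel_measurable borel"
proof -
  have "mono (\<lambda>x. - Ymax (exp x))"
    by (auto simp: mono_def intro!: Ymax_anti')
  then have "(\<lambda>x. - Ymax (exp x)) \<in> borel_measurable borel" by (rule borel_measurable_mono)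
  then have "(\<lambda>x. - (- Ymax (exp x))) \<in> borel_measurable borel" by measurable
  then show ?thesis by simp
qed

end

locale opt = ptw F \<alpha> C + prob_space M for F \<alpha> C and M :: "'a measure" +
  fixes N :: "'a measure" and Z :: "'a \<Rightarrow> real" and D :: real
  assumes subN: "sets N \<subseteq> sets M" "space N = space M"
  and Zmeas: "Z \<in> borel_measurable N"
  and Zpos: "\<And>\<omega>. \<omega> \<in> space M \<Longrightarrow> Z \<omega> > 0"
  and Zint: "integrable M Z"
  and Zneg: "integrable M (\<lambda>\<omega>. Z \<omega> powr (-(\<alpha>/(1-\<alpha>))))"
  and Zatom: "\<And>S. countable S \<Longrightarrow> AE \<omega> in M. Z \<omega> \<notin> S"
  and Fbound: "\<And>y. 0 \<le> y \<Longrightarrow> \<bar>F y\<bar> \<le> D * (1 + y powr \<alpha>)"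
begin

definition Adm :: "('a \<Rightarrow> real) set" where
  "Adm = {Y. Y \<in> borel_measurable N \<and> (\<forall>\<omega>\<in>space M. 0 \<le> Y \<omega>) \<and>
            (\<integral>\<^sup>+\<omega>. ennreal (Z \<omega> * Y \<omega>) \<partial>M) \<le> 1}"

definition isMax :: "('a \<Rightarrow> real) \<Rightarrow> bool" where
  "isMax Y \<longleftrightarrow> Y \<in> Adm \<and> (\<forall>Y'\<in>Adm. (\<integral>\<omega>. F (Y' \<omega>) \<partial>M) \<le> (\<integral>\<omega>. F (Y \<omega>) \<partial>M))"

lemma measN: "f \<in> borel_measurable N \<Longrightarrow> f \<in> borel_measurable M"
  using subN unfolding measurable_def by auto

lemma ZmeasM[measurable]: "Z \<in> borel_measurable M"
  by (rule measN[OF Zmeas])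

lemma Fmeas[measurable]: "F \<in> borel_measurable borel"
  by (rule borel_measurable_continuous_onI[OF contF])

lemma young:
  assumes "\<omega> \<in> space M" "0 \<le> y"
  shows "y powr \<alpha> \<le> \<alpha> * (Z \<omega> * y) + (1-\<alpha>) * Z \<omega> powr (-(\<alpha>/(1-\<alpha>)))"
proof -
  have Z: "Z \<omega> > 0" using Zpos assms by auto
  let ?u = "Z \<omega> powr (-(1/(1-\<alpha>)))"
  have u: "?u > 0" using Z by simp
  have "?u powr (\<alpha>-1) = Z \<omega> powr ((-(1/(1-\<alpha>))) * (\<alpha>-1))"
    by (simp add: powr_powr)
  also have "(-(1/(1-\<alpha>))) * (\<alpha>-1) = 1" using alpha by (simp add: field_simps)
  finally have u1: "?u powr (\<alpha>-1) = Z \<omega>" using Z by simp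
  have "?u powr \<alpha> = Z \<omega> powr ((-(1/(1-\<alpha>))) * \<alpha>)"
    by (simp add: powr_powr)
  also have "(-(1/(1-\<alpha>))) * \<alpha> = -(\<alpha>/(1-\<alpha>))" using alpha by (simp add: field_simps)
  finally have u2: "?u powr \<alpha> = Z \<omega> powr (-(\<alpha>/(1-\<alpha>)))" .
  show ?thesis
    using tangent_powr[OF alpha u assms(2)] u1 u2 by (simp add: mult.assoc)
qed

lemma gen_int:
  assumes Y[measurable]: "Y \<in> borel_measurable M" and nn: "\<And>\<omega>. \<omega> \<in> space M \<Longrightarrow> 0 \<le> Y \<omega>"
    and ZY: "integrable M (\<lambda>\<omega>. Z \<omega> * Y \<omega>)"
  shows "integrable M (\<lambda>\<omega>. Y \<omega> powr \<alpha>)" "integrable M (\<lambda>\<omega>. F (Y \<omega>))"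
proof -
  have w: "integrable M (\<lambda>\<omega>. \<alpha> * (Z \<omega> * Y \<omega>) + (1-\<alpha>) * Z \<omega> powr (-(\<alpha>/(1-\<alpha>))))"
    using ZY Zneg by (intro Bochner_Integration.integrable_add integrable_mult_right) auto
  show i1: "integrable M (\<lambda>\<omega>. Y \<omega> powr \<alpha>)"
  proof (rule Bochner_Integration.integrable_bound[OF w])
    show "(\<lambda>\<omega>. Y \<omega> powr \<alpha>) \<in> borel_measurable M" by measurable
    show "AE \<omega> in M. norm (Y \<omega> powr \<alpha>) \<le> norm (\<alpha> * (Z \<omega> * Y \<omega>) + (1-\<alpha>) * Z \<omega> powr (-(\<alpha>/(1-\<alpha>))))"
    proof (rule AE_I2)
      fix \<omega> assume o: "\<omega> \<in> space M"
      have "0 \<le> \<alpha> * (Z \<omega> * Y \<omega>) + (1-\<alpha>) * Z \<omega> powr (-(\<alpha>/(1-\<alpha>)))"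
        using alpha Zpos[OF o] nn[OF o] by (intro add_nonneg_nonneg mult_nonneg_nonneg) auto
      then show "norm (Y \<omega> powr \<alpha>) \<le> norm (\<alpha> * (Z \<omega> * Y \<omega>) + (1-\<alpha>) * Z \<omega> powr (-(\<alpha>/(1-\<alpha>))))"
        using young[OF o nn[OF o]] by simp
    qed
  qed
  show "integrable M (\<lambda>\<omega>. F (Y \<omega>))"
  proof (rule Bochner_Integration.integrable_bound)
    show "integrable M (\<lambda>\<omega>. D * (1 + Y \<omega> powr \<alpha>))"
      using i1 by (intro integrable_mult_right Bochner_Integration.integrable_add) auto
    show "(\<lambda>\<omega>. F (Y \<omega>)) \<in> borel_measurable M" by measurable
    show "AE \<omega> in M. norm (F (Y \<omega>)) \<le> norm (D * (1 + Y \<omega> powr \<alpha>))"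
    proof (rule AE_I2)
      fix \<omega> assume o: "\<omega> \<in> space M"
      have "\<bar>F (Y \<omega>)\<bar> \<le> D * (1 + Y \<omega> powr \<alpha>)" using Fbound nn[OF o] by auto
      then show "norm (F (Y \<omega>)) \<le> norm (D * (1 + Y \<omega> powr \<alpha>))" by simp
    qed
  qed
qed

lemma Adm_ZY:
  assumes "Y \<in> Adm"
  shows "integrable M (\<lambda>\<omega>. Z \<omega> * Y \<omega>)" "(\<integral>\<omega>. Z \<omega> * Y \<omega> \<partial>M) \<le> 1"
proof -
  have Y[measurable]: "Y \<in> borel_measurable M" using assms measN by (auto simp: Adm_def)
  have nn: "AE \<omega> in M. 0 \<le> Z \<omega> * Y \<omega>"
  proof (rule AE_I2)
    fix \<omega> assume "\<omega> \<in> space M"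
    then show "0 \<le> Z \<omega> * Y \<omega>" using assms Zpos[of \<omega>] by (auto simp: Adm_def)
  qed
  have le: "(\<integral>\<^sup>+\<omega>. ennreal (Z \<omega> * Y \<omega>) \<partial>M) \<le> 1" using assms by (auto simp: Adm_def)
  show i: "integrable M (\<lambda>\<omega>. Z \<omega> * Y \<omega>)"
    using le nn by (intro integrableI_nonneg) (auto simp: top_unique intro: le_less_trans)
  have "ennreal (\<integral>\<omega>. Z \<omega> * Y \<omega> \<partial>M) \<le> 1"
    using nn_integral_eq_integral[OF i nn] le by simp
  then show "(\<integral>\<omega>. Z \<omega> * Y \<omega> \<partial>M) \<le> 1"
    by (simp add: ennreal_le_1)
qed

lemma Adm_int:
  assumes "Y \<in> Adm"
  shows "integrable M (\<lambda>\<omega>. Y \<omega> powr \<alpha>)" "integrable M (\<lambda>\<omega>. F (Y \<omega>))"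
  using gen_int[of Y] assms measN Adm_ZY(1)[OF assms] by (auto simp: Adm_def)

end

context opt begin

definition Ylam :: "real \<Rightarrow> 'a \<Rightarrow> real" where "Ylam l \<omega> = Ymax (l * Z \<omega>)"
definition mfun :: "real \<Rightarrow> real" where "mfun l = (\<integral>\<omega>. Z \<omega> * Ylam l \<omega> \<partial>M)"

lemma Ylam_measN:
  assumes l: "l > 0"
  shows "Ylam l \<in> borel_measurable N"
proof -
  have "(\<lambda>\<omega>. Ymax (exp (ln (l * Z \<omega>)))) \<in> borel_measurable N"
    using Ymax_meas_aux Zmeas by measurable
  moreover have "\<And>\<omega>. \<omega> \<in> space N \<Longrightarrow> Ymax (exp (ln (l * Z \<omega>))) = Ylam l \<omega>"
    using Zpos l subN by (simp add: Ylam_def)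
  ultimately show ?thesis by (simp cong: measurable_cong)
qed

lemma Ylam_meas[measurable]: "l > 0 \<Longrightarrow> Ylam l \<in> borel_measurable M"
  by (rule measN[OF Ylam_measN])

lemma Ylam_nonneg: "l > 0 \<Longrightarrow> \<omega> \<in> space M \<Longrightarrow> 0 \<le> Ylam l \<omega>"
  using Ymax_nonneg Zpos by (simp add: Ylam_def)

lemma Ylam_bound:
  assumes l: "l > 0" and o: "\<omega> \<in> space M"
  shows "Z \<omega> * Ylam l \<omega> \<le> (C/l) powr (1/(1-\<alpha>)) * Z \<omega> powr (-(\<alpha>/(1-\<alpha>)))"
proof -
  have Z: "Z \<omega> > 0" using Zpos o by auto
  have "Ylam l \<omega> \<le> bnd (l * Z \<omega>)" unfolding Ylam_def using l Z by (intro Ymax_le_bnd) auto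
  then have "Z \<omega> * Ylam l \<omega> \<le> Z \<omega> * (C/(l * Z \<omega>)) powr (1/(1-\<alpha>))"
    using Z by (simp add: bnd_def)
  also have "(C/(l * Z \<omega>)) powr (1/(1-\<alpha>)) = (C/l) powr (1/(1-\<alpha>)) * Z \<omega> powr (-(1/(1-\<alpha>)))"
  proof -
    have "C/(l * Z \<omega>) = (C/l) / Z \<omega>" by simp
    then have "(C/(l * Z \<omega>)) powr (1/(1-\<alpha>)) = (C/l) powr (1/(1-\<alpha>)) / Z \<omega> powr (1/(1-\<alpha>))"
      using Z l Cpos by (simp add: powr_divide powr_mult)
    also have "\<dots> = (C/l) powr (1/(1-\<alpha>)) * Z \<omega> powr (-(1/(1-\<alpha>)))"
      by (simp add: powr_minus_divide)
    finally show ?thesis .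
  qed
  also have "Z \<omega> * ((C/l) powr (1/(1-\<alpha>)) * Z \<omega> powr (-(1/(1-\<alpha>)))) =
      (C/l) powr (1/(1-\<alpha>)) * (Z \<omega> powr 1 * Z \<omega> powr (-(1/(1-\<alpha>))))"
    using Z by simp
  also have "Z \<omega> powr 1 * Z \<omega> powr (-(1/(1-\<alpha>))) = Z \<omega> powr (1 - 1/(1-\<alpha>))"
    using powr_add[of "Z \<omega>" 1 "-(1/(1-\<alpha>))"] by simp
  also have "1 - 1/(1-\<alpha>) = -(\<alpha>/(1-\<alpha>))" using alpha by (simp add: field_simps)
  finally show ?thesis .
qed

lemma Ylam_ZY_int:
  assumes l: "l > 0"
  shows "integrable M (\<lambda>\<omega>. Z \<omega> * Ylam l \<omega>)"
proof (rule Bochner_Integration.integrable_bound)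
  show "integrable M (\<lambda>\<omega>. (C/l) powr (1/(1-\<alpha>)) * Z \<omega> powr (-(\<alpha>/(1-\<alpha>))))"
    using Zneg by (intro integrable_mult_right) auto
  show "(\<lambda>\<omega>. Z \<omega> * Ylam l \<omega>) \<in> borel_measurable M" using l by measurable
  show "AE \<omega> in M. norm (Z \<omega> * Ylam l \<omega>) \<le> norm ((C/l) powr (1/(1-\<alpha>)) * Z \<omega> powr (-(\<alpha>/(1-\<alpha>))))"
  proof (rule AE_I2)
    fix \<omega> assume o: "\<omega> \<in> space M"
    have "0 \<le> Z \<omega> * Ylam l \<omega>" using Zpos[OF o] Ylam_nonneg[OF l o] by simp
    then show "norm (Z \<omega> * Ylam l \<omega>) \<le> norm ((C/l) powr (1/(1-\<alpha>)) * Z \<omega> powr (-(\<alpha>/(1-\<alpha>))))"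
      using Ylam_bound[OF l o] by simp
  qed
qed

lemma Ylam_int:
  assumes l: "l > 0"
  shows "integrable M (\<lambda>\<omega>. F (Ylam l \<omega>))"
  using gen_int(2)[of "Ylam l"] l Ylam_nonneg Ylam_ZY_int by auto

lemma mfun_nonneg: "l > 0 \<Longrightarrow> 0 \<le> mfun l"
  unfolding mfun_def using Zpos Ylam_nonneg by (intro integral_nonneg_AE AE_I2) (simp add: less_imp_le)

lemma mfun_anti:
  assumes "0 < l1" "l1 \<le> l2"
  shows "mfun l2 \<le> mfun l1"
  unfolding mfun_def
proof (rule integral_mono[OF Ylam_ZY_int Ylam_ZY_int])
  fix \<omega> assume o: "\<omega> \<in> space M"
  have "Ylam l2 \<omega> \<le> Ylam l1 \<omega>"
    unfolding Ylam_def using assms Zpos[OF o] by (intro Ymax_anti') auto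
  then show "Z \<omega> * Ylam l2 \<omega> \<le> Z \<omega> * Ylam l1 \<omega>" using Zpos[OF o] by simp
qed (use assms in auto)

lemma mfun_small:
  assumes l: "l > 0"
  shows "mfun l \<le> (C/l) powr (1/(1-\<alpha>)) * (\<integral>\<omega>. Z \<omega> powr (-(\<alpha>/(1-\<alpha>))) \<partial>M)"
proof -
  have "mfun l \<le> (\<integral>\<omega>. (C/l) powr (1/(1-\<alpha>)) * Z \<omega> powr (-(\<alpha>/(1-\<alpha>))) \<partial>M)"
    unfolding mfun_def using Ylam_bound[OF l] Zneg
    by (intro integral_mono Ylam_ZY_int[OF l] integrable_mult_right) auto
  then show ?thesis by simp
qed

lemma Ylam_Adm:
  assumes l: "l > 0" and m: "mfun l \<le> 1"
  shows "Ylam l \<in> Adm"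
proof -
  have nn: "AE \<omega> in M. 0 \<le> Z \<omega> * Ylam l \<omega>"
    using Zpos Ylam_nonneg[OF l] by (intro AE_I2) (simp add: less_imp_le)
  have "(\<integral>\<^sup>+\<omega>. ennreal (Z \<omega> * Ylam l \<omega>) \<partial>M) = ennreal (mfun l)"
    unfolding mfun_def by (rule nn_integral_eq_integral[OF Ylam_ZY_int[OF l] nn])
  then show ?thesis
    unfolding Adm_def using Ylam_measN[OF l] Ylam_nonneg[OF l] m by auto
qed

lemma AE_not_Ties:
  assumes l: "l > 0"
  shows "AE \<omega> in M. l * Z \<omega> \<notin> Ties"
proof -
  have "countable ((\<lambda>x. x / l) ` Ties)" using countable_Ties by simp
  from Zatom[OF this] show ?thesis
  proof (rule eventually_mono)
    fix \<omega> assume "Z \<omega> \<notin> (\<lambda>x. x / l) ` Ties"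
    then show "l * Z \<omega> \<notin> Ties" using l by (metis image_eqI nonzero_mult_div_cancel_left less_irrefl)
  qed
qed

lemma lagrange_unique:
  assumes l: "l > 0" and m: "mfun l = 1" and Y: "isMax Y"
  shows "AE \<omega> in M. Y \<omega> = Ylam l \<omega>"
proof -
  have YA: "Y \<in> Adm" using Y by (simp add: isMax_def)
  have Ym[measurable]: "Y \<in> borel_measurable M" using YA measN by (auto simp: Adm_def)
  have Ynn: "\<And>\<omega>. \<omega> \<in> space M \<Longrightarrow> 0 \<le> Y \<omega>" using YA by (auto simp: Adm_def)
  have sA: "Ylam l \<in> Adm" using Ylam_Adm[OF l] m by simp
  have ge: "(\<integral>\<omega>. F (Ylam l \<omega>) \<partial>M) \<le> (\<integral>\<omega>. F (Y \<omega>) \<partial>M)"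
    using Y sA by (auto simp: isMax_def)
  define g where "g \<omega> = (F (Ylam l \<omega>) - l * Z \<omega> * Ylam l \<omega>) - (F (Y \<omega>) - l * Z \<omega> * Y \<omega>)" for \<omega>
  have gnn: "0 \<le> g \<omega>" if o: "\<omega> \<in> space M" for \<omega>
  proof -
    have t: "l * Z \<omega> > 0" using l Zpos[OF o] by simp
    have "F (Y \<omega>) - l * Z \<omega> * Y \<omega> \<le> Psi (l * Z \<omega>)" using Psi_ge[OF t Ynn[OF o]] .
    then show ?thesis by (simp add: g_def Psi_def Ylam_def)
  qed
  have i1: "integrable M (\<lambda>\<omega>. F (Ylam l \<omega>))" by (rule Ylam_int[OF l])
  have i2: "integrable M (\<lambda>\<omega>. Z \<omega> * Ylam l \<omega>)" by (rule Ylam_ZY_int[OF l])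
  have i3: "integrable M (\<lambda>\<omega>. F (Y \<omega>))" by (rule Adm_int(2)[OF YA])
  have i4: "integrable M (\<lambda>\<omega>. Z \<omega> * Y \<omega>)" by (rule Adm_ZY(1)[OF YA])
  have gint: "integrable M g"
    unfolding g_def using i1 i2 i3 i4
    by (intro Bochner_Integration.integrable_diff) (auto simp: mult.assoc)
  have "(\<integral>\<omega>. g \<omega> \<partial>M) = (\<integral>\<omega>. F (Ylam l \<omega>) \<partial>M) - l * mfun l - (\<integral>\<omega>. F (Y \<omega>) \<partial>M) + l * (\<integral>\<omega>. Z \<omega> * Y \<omega> \<partial>M)"
  proof -
    have "(\<integral>\<omega>. g \<omega> \<partial>M) = (\<integral>\<omega>. F (Ylam l \<omega>) - l * (Z \<omega> * Ylam l \<omega>) - F (Y \<omega>) + l * (Z \<omega> * Y \<omega>) \<partial>M)"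
      unfolding g_def by (intro Bochner_Integration.integral_cong) (auto simp: algebra_simps)
    also have "\<dots> = (\<integral>\<omega>. F (Ylam l \<omega>) \<partial>M) - (\<integral>\<omega>. l * (Z \<omega> * Ylam l \<omega>) \<partial>M) - (\<integral>\<omega>. F (Y \<omega>) \<partial>M) + (\<integral>\<omega>. l * (Z \<omega> * Y \<omega>) \<partial>M)"
      using i1 i2 i3 i4
      by (simp add: Bochner_Integration.integral_add Bochner_Integration.integral_diff
          Bochner_Integration.integrable_diff Bochner_Integration.integrable_add)
    finally show ?thesis by (simp add: mfun_def)
  qed
  also have "\<dots> \<le> 0"
  proof -
    have "l * (\<integral>\<omega>. Z \<omega> * Y \<omega> \<partial>M) \<le> l" using mult_left_le[OF Adm_ZY(2)[OF YA]] l by simp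
    then show ?thesis using ge m by simp
  qed
  finally have "(\<integral>\<omega>. g \<omega> \<partial>M) \<le> 0" .
  moreover have "0 \<le> (\<integral>\<omega>. g \<omega> \<partial>M)" using gnn by (intro integral_nonneg_AE AE_I2) auto
  ultimately have "(\<integral>\<omega>. g \<omega> \<partial>M) = 0" by simp
  then have "AE \<omega> in M. g \<omega> = 0"
    using integral_nonneg_eq_0_iff_AE[OF gint] gnn by (auto intro: AE_I2)
  with AE_not_Ties[OF l] AE_space show ?thesis
  proof (eventually_elim)
    case (elim \<omega>)
    have t: "l * Z \<omega> > 0" using l Zpos elim by simp
    have "Psi (l * Z \<omega>) \<le> F (Y \<omega>) - l * Z \<omega> * Y \<omega>"
      using elim by (simp add: g_def Psi_def Ylam_def)
    then have "Y \<omega> \<in> argm (l * Z \<omega>)" using argm_iff[OF t Ynn] elim by simp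
    then show ?case using unique_argm[OF t] elim by (simp add: Ylam_def)
  qed
qed

end

context opt begin

lemma mfun_eventually_small: "\<exists>L. \<forall>l\<ge>L. mfun l < 1"
proof -
  define E where "E = (\<integral>\<omega>. Z \<omega> powr (-(\<alpha>/(1-\<alpha>))) \<partial>M)"
  have "((\<lambda>l. C / l) \<longlongrightarrow> 0) at_top"
    by (intro tendsto_divide_0[OF tendsto_const] filterlim_at_top_imp_at_infinity[OF filterlim_ident])
  then have "((\<lambda>l. (C/l) powr (1/(1-\<alpha>))) \<longlongrightarrow> 0) at_top"
  proof (rule tendsto_zero_powrI)
    show "((\<lambda>l. 1/(1-\<alpha>)) \<longlongrightarrow> 1/(1-\<alpha>)) at_top" by simp
    show "\<forall>\<^sub>F l in at_top. 0 \<le> C / l"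
      by (rule eventually_at_top_linorderI[of 0]) (use Cpos in simp)
    show "0 < 1/(1-\<alpha>)" using alpha by simp
  qed
  then have "((\<lambda>l. (C/l) powr (1/(1-\<alpha>)) * E) \<longlongrightarrow> 0 * E) at_top"
    by (intro tendsto_mult tendsto_const)
  then have "\<forall>\<^sub>F l in at_top. (C/l) powr (1/(1-\<alpha>)) * E < 1"
    by (intro order_tendstoD(2)) auto
  then obtain L where L: "\<And>l. l \<ge> L \<Longrightarrow> (C/l) powr (1/(1-\<alpha>)) * E < 1"
    by (auto simp: eventually_at_top_linorder)
  show ?thesis
  proof (intro exI allI impI)
    fix l assume l: "l \<ge> max L 1"
    then have "mfun l \<le> (C/l) powr (1/(1-\<alpha>)) * E" unfolding E_def by (intro mfun_small) auto
    also have "\<dots> < 1" using L l by auto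
    finally show "mfun l < 1" .
  qed
qed

lemma binding_exists:
  assumes ex: "\<exists>l>0. 1 \<le> mfun l"
  shows "\<exists>l>0. mfun l = 1"
proof -
  define S where "S = {l. l > 0 \<and> 1 \<le> mfun l}"
  obtain l0 where l0: "l0 \<in> S" using ex by (auto simp: S_def)
  obtain L where L: "\<And>l. l \<ge> L \<Longrightarrow> mfun l < 1" using mfun_eventually_small by auto
  have bdd: "bdd_above S"
    unfolding bdd_above_def S_def using L by (metis (mono_tags, lifting) mem_Collect_eq not_le not_less_iff_gr_or_eq)
  define ls where "ls = Sup S"
  have ls0: "l0 \<le> ls" unfolding ls_def by (rule cSup_upper[OF l0 bdd])
  have lpos: "ls > 0" using l0 ls0 by (auto simp: S_def)
  have below: "1 \<le> mfun l" if lh: "0 < l" "l < ls" for l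
  proof -
    obtain x where "x \<in> S" "l < x" using lh less_cSup_iff[of S l] l0 bdd by (auto simp: ls_def)
    then show ?thesis using mfun_anti[of l x] lh by (auto simp: S_def)
  qed
  have above: "mfun l < 1" if "ls < l" for l
  proof (rule ccontr)
    assume "\<not> mfun l < 1"
    then have "l \<in> S" using that lpos by (auto simp: S_def)
    then have "l \<le> ls" unfolding ls_def by (rule cSup_upper[OF _ bdd])
    then show False using that by simp
  qed
  define e where "e n = inverse (real (Suc (Suc n)))" for n
  have e0: "e \<longlonglongrightarrow> 0"
    unfolding e_def by (rule LIMSEQ_Suc[OF LIMSEQ_inverse_real_of_nat])
  have epos: "0 < e n" and ehalf: "e n \<le> 1/2" for n by (auto simp: e_def field_simps)
  have edec: "e (Suc n) \<le> e n" for n by (auto simp: e_def field_simps)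
  define a where "a n = ls * (1 - e n)" for n
  have apos: "0 < a n" and aless: "a n < ls" and ahalf: "ls/2 \<le> a n" for n
    using lpos epos[of n] ehalf[of n] by (auto simp: a_def field_simps)
  have ainc: "incseq a"
    by (rule incseq_SucI) (use lpos edec in \<open>auto simp: a_def intro!: mult_left_mono\<close>)
  have alim: "a \<longlonglongrightarrow> ls"
    unfolding a_def using tendsto_mult[OF tendsto_const[of ls] tendsto_diff[OF tendsto_const[of 1] e0]] by simp
  have "(\<lambda>n. mfun (a n)) \<longlonglongrightarrow> mfun ls"
    unfolding mfun_def
  proof (rule integral_dominated_convergence[where w="\<lambda>\<omega>. Z \<omega> * Ylam (ls/2) \<omega>"])
    show "(\<lambda>\<omega>. Z \<omega> * Ylam ls \<omega>) \<in> borel_measurable M" using lpos by measurable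
    show "(\<lambda>\<omega>. Z \<omega> * Ylam (a n) \<omega>) \<in> borel_measurable M" for n using apos[of n] by measurable
    show "integrable M (\<lambda>\<omega>. Z \<omega> * Ylam (ls/2) \<omega>)" using lpos by (intro Ylam_ZY_int) auto
    show "AE \<omega> in M. (\<lambda>n. Z \<omega> * Ylam (a n) \<omega>) \<longlonglongrightarrow> Z \<omega> * Ylam ls \<omega>"
    proof (rule AE_I2)
      fix \<omega> assume o: "\<omega> \<in> space M"
      have Z: "Z \<omega> > 0" using Zpos o by auto
      have "(\<lambda>n. Ymax (a n * Z \<omega>)) \<longlonglongrightarrow> Ymax (ls * Z \<omega>)"
      proof (rule Ymax_left)
        show "0 < ls * Z \<omega>" using lpos Z by simp
        show "0 < a n * Z \<omega>" for n using apos Z by simp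
        show "a n * Z \<omega> \<le> ls * Z \<omega>" for n using aless[of n] Z by simp
        show "incseq (\<lambda>n. a n * Z \<omega>)" using ainc Z by (auto simp: incseq_def)
        show "(\<lambda>n. a n * Z \<omega>) \<longlonglongrightarrow> ls * Z \<omega>" by (intro tendsto_mult alim tendsto_const)
      qed
      then show "(\<lambda>n. Z \<omega> * Ylam (a n) \<omega>) \<longlonglongrightarrow> Z \<omega> * Ylam ls \<omega>"
        unfolding Ylam_def by (intro tendsto_mult tendsto_const)
    qed
    show "AE \<omega> in M. norm (Z \<omega> * Ylam (a n) \<omega>) \<le> Z \<omega> * Ylam (ls/2) \<omega>" for n
    proof (rule AE_I2)
      fix \<omega> assume o: "\<omega> \<in> space M"
      have Z: "Z \<omega> > 0" using Zpos o by auto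
      have "Ylam (a n) \<omega> \<le> Ylam (ls/2) \<omega>"
        unfolding Ylam_def using ahalf[of n] Z lpos by (intro Ymax_anti') auto
      then show "norm (Z \<omega> * Ylam (a n) \<omega>) \<le> Z \<omega> * Ylam (ls/2) \<omega>"
        using Z Ylam_nonneg[OF apos o] by simp
    qed
  qed
  then have ge1: "1 \<le> mfun ls"
    by (rule LIMSEQ_le_const) (use below apos aless in auto)
  define b where "b n = ls * (1 + e n)" for n
  have bge: "ls < b n" for n
    using lpos epos[of n] by (auto simp: b_def field_simps)
  have bdec: "decseq b"
    by (rule decseq_SucI) (use lpos edec in \<open>auto simp: b_def intro!: mult_left_mono\<close>)
  have blim: "b \<longlonglongrightarrow> ls"
    unfolding b_def using tendsto_mult[OF tendsto_const[of ls] tendsto_add[OF tendsto_const[of 1] e0]] by simp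
  have "(\<lambda>n. mfun (b n)) \<longlonglongrightarrow> mfun ls"
    unfolding mfun_def
  proof (rule integral_dominated_convergence[where w="\<lambda>\<omega>. Z \<omega> * Ylam ls \<omega>"])
    show "(\<lambda>\<omega>. Z \<omega> * Ylam ls \<omega>) \<in> borel_measurable M" using lpos by measurable
    show "(\<lambda>\<omega>. Z \<omega> * Ylam (b n) \<omega>) \<in> borel_measurable M" for n
    proof -
      have "0 < b n" using bge[of n] lpos by linarith
      then show ?thesis by measurable
    qed
    show "integrable M (\<lambda>\<omega>. Z \<omega> * Ylam ls \<omega>)" using lpos by (intro Ylam_ZY_int) auto
    show "AE \<omega> in M. (\<lambda>n. Z \<omega> * Ylam (b n) \<omega>) \<longlonglongrightarrow> Z \<omega> * Ylam ls \<omega>"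
      using AE_not_Ties[OF lpos] AE_space
    proof (eventually_elim)
      case (elim \<omega>)
      have Z: "Z \<omega> > 0" using Zpos elim by auto
      have "(\<lambda>n. Ymax (b n * Z \<omega>)) \<longlonglongrightarrow> Ymax (ls * Z \<omega>)"
      proof (rule Ymax_right)
        show "0 < ls * Z \<omega>" using lpos Z by simp
        show "ls * Z \<omega> \<notin> Ties" using elim by simp
        show "ls * Z \<omega> \<le> b n * Z \<omega>" for n using bge[of n] Z by simp
        show "decseq (\<lambda>n. b n * Z \<omega>)" using bdec Z by (auto simp: decseq_def)
        show "(\<lambda>n. b n * Z \<omega>) \<longlonglongrightarrow> ls * Z \<omega>" by (intro tendsto_mult blim tendsto_const)
      qed
      then show ?case
        unfolding Ylam_def by (intro tendsto_mult tendsto_const)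
    qed
    show "AE \<omega> in M. norm (Z \<omega> * Ylam (b n) \<omega>) \<le> Z \<omega> * Ylam ls \<omega>" for n
    proof (rule AE_I2)
      fix \<omega> assume o: "\<omega> \<in> space M"
      have Z: "Z \<omega> > 0" using Zpos o by auto
      have bp: "0 < b n" using bge[of n] lpos by simp
      have "Ylam (b n) \<omega> \<le> Ylam ls \<omega>"
        unfolding Ylam_def using bge[of n] Z lpos by (intro Ymax_anti') auto
      then show "norm (Z \<omega> * Ylam (b n) \<omega>) \<le> Z \<omega> * Ylam ls \<omega>"
        using Z Ylam_nonneg[OF bp o] by simp
    qed
  qed
  then have le1: "mfun ls \<le> 1"
    by (rule LIMSEQ_le_const2) (use above bge in \<open>auto intro: less_imp_le\<close>)
  show ?thesis using ge1 le1 lpos by (intro exI[of _ ls]) auto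
qed

end

context opt begin

lemma nonbinding_max:
  assumes nb: "\<forall>l>0. mfun l < 1" and Y: "isMax Y"
  shows "AE \<omega> in M. \<forall>x\<ge>0. F x \<le> F (Y \<omega>)"
proof -
  have YA: "Y \<in> Adm" using Y by (simp add: isMax_def)
  have Ym[measurable]: "Y \<in> borel_measurable M" using YA measN by (auto simp: Adm_def)
  have Ynn: "\<And>\<omega>. \<omega> \<in> space M \<Longrightarrow> 0 \<le> Y \<omega>" using YA by (auto simp: Adm_def)
  define V where "V = (\<integral>\<omega>. F (Y \<omega>) \<partial>M)"
  define EZ where "EZ = (\<integral>\<omega>. Z \<omega> \<partial>M)"
  have EZ0: "0 \<le> EZ" unfolding EZ_def using Zpos by (intro integral_nonneg_AE AE_I2) (simp add: less_imp_le)
  have step: "F y0 \<le> V + l * (y0 * EZ)" if y0: "0 \<le> y0" and l: "0 < l" for y0 l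
  proof -
    have A: "Ylam l \<in> Adm" using Ylam_Adm[OF l] nb l by (simp add: less_imp_le)
    have "(\<integral>\<omega>. F y0 - l * y0 * Z \<omega> \<partial>M) \<le> (\<integral>\<omega>. F (Ylam l \<omega>) \<partial>M)"
    proof (rule integral_mono)
      show "integrable M (\<lambda>\<omega>. F y0 - l * y0 * Z \<omega>)"
        using Zint by (intro Bochner_Integration.integrable_diff integrable_mult_right) auto
      show "integrable M (\<lambda>\<omega>. F (Ylam l \<omega>))" by (rule Ylam_int[OF l])
      fix \<omega> assume o: "\<omega> \<in> space M"
      have t: "l * Z \<omega> > 0" using l Zpos[OF o] by simp
      have "F y0 - l * Z \<omega> * y0 \<le> Psi (l * Z \<omega>)" by (rule Psi_ge[OF t y0])
      also have "\<dots> \<le> F (Ylam l \<omega>)"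
        using Ylam_nonneg[OF l o] t by (simp add: Psi_def Ylam_def)
      finally show "F y0 - l * y0 * Z \<omega> \<le> F (Ylam l \<omega>)" by (simp add: algebra_simps)
    qed
    also have "\<dots> \<le> V" using Y A by (auto simp: isMax_def V_def)
    finally have "(\<integral>\<omega>. F y0 - l * y0 * Z \<omega> \<partial>M) \<le> V" .
    moreover have "(\<integral>\<omega>. F y0 - l * y0 * Z \<omega> \<partial>M) = F y0 - l * (y0 * EZ)"
      using Zint by (simp add: Bochner_Integration.integral_diff EZ_def prob_space)
    ultimately show ?thesis by simp
  qed
  have FV: "F y0 \<le> V" if y0: "0 \<le> y0" for y0
  proof (rule field_le_epsilon)
    fix e :: real assume e: "0 < e"
    define l where "l = e / (y0 * EZ + 1)"
    have d: "y0 * EZ + 1 > 0" using y0 EZ0 by (simp add: add_nonneg_pos)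
    have l: "0 < l" using e d by (simp add: l_def)
    have "l * (y0 * EZ) \<le> l * (y0 * EZ + 1)" using l by simp
    also have "\<dots> = e" using d by (simp add: l_def)
    finally show "F y0 \<le> V + e" using step[OF y0 l] by simp
  qed
  define h where "h \<omega> = V - F (Y \<omega>)" for \<omega>
  have hint: "integrable M h" unfolding h_def using Adm_int(2)[OF YA] by auto
  have hnn: "AE \<omega> in M. 0 \<le> h \<omega>" by (intro AE_I2) (simp add: h_def FV Ynn)
  have "(\<integral>\<omega>. h \<omega> \<partial>M) = 0"
    unfolding h_def using Adm_int(2)[OF YA] by (simp add: Bochner_Integration.integral_diff V_def prob_space)
  then have "AE \<omega> in M. h \<omega> = 0" using integral_nonneg_eq_0_iff_AE[OF hint hnn] by simp
  then show ?thesis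
    by (rule eventually_mono) (use FV in \<open>auto simp: h_def\<close>)
qed

theorem maximizers_AE_eq:
  assumes uniqF: "\<And>a b. 0 \<le> a \<Longrightarrow> 0 \<le> b \<Longrightarrow> (\<forall>x\<ge>0. F x \<le> F a) \<Longrightarrow> (\<forall>x\<ge>0. F x \<le> F b) \<Longrightarrow> a = b"
    and Y1: "isMax Y1" and Y2: "isMax Y2"
  shows "AE \<omega> in M. Y1 \<omega> = Y2 \<omega>"
proof (cases "\<exists>l>0. 1 \<le> mfun l")
  case True
  then obtain l where l: "l > 0" "mfun l = 1" using binding_exists by auto
  show ?thesis
    using lagrange_unique[OF l Y1] lagrange_unique[OF l Y2] by eventually_elim simp
next
  case False
  then have nb: "\<forall>l>0. mfun l < 1" by auto
  have n1: "\<forall>\<omega>\<in>space M. 0 \<le> Y1 \<omega>" and n2: "\<forall>\<omega>\<in>space M. 0 \<le> Y2 \<omega>"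
    using Y1 Y2 by (auto simp: isMax_def Adm_def)
  show ?thesis
    using nonbinding_max[OF nb Y1] nonbinding_max[OF nb Y2] AE_space
  proof eventually_elim
    case (elim \<omega>)
    then show ?case using uniqF[of "Y1 \<omega>" "Y2 \<omega>"] n1 n2 by auto
  qed
qed

end

lemma small_ratio_gen:
  fixes a t y c :: real
  assumes a: "0 < a" "a < 1" and "t > 0" "y > 0" "c > 0"
  shows "t * y \<le> c * y powr a \<longleftrightarrow> y \<le> (c/t) powr (1/(1-a))"
proof -
  have "y = y powr (1-a) * y powr a" using assms by (simp add: powr_add[symmetric])
  then have "t * y \<le> c * y powr a \<longleftrightarrow> t * y powr (1-a) * y powr a \<le> c * y powr a"
    by (metis mult.assoc)
  also have "\<dots> \<longleftrightarrow> t * y powr (1-a) \<le> c"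
    using assms by (simp add: mult_le_cancel_right)
  also have "\<dots> \<longleftrightarrow> y powr (1-a) \<le> c / t"
    using assms by (simp add: pos_le_divide_eq mult.commute)
  also have "\<dots> \<longleftrightarrow> (y powr (1-a)) powr (1/(1-a)) \<le> (c/t) powr (1/(1-a))"
    using assms powr_le_iff_base[of "1/(1-a)" "y powr (1-a)" "c/t"] by auto
  also have "(y powr (1-a)) powr (1/(1-a)) = y"
    using assms by (simp add: powr_powr)
  finally show ?thesis .
qed

locale Fpar =
  fixes \<alpha> k \<gamma> :: real
  assumes a0: "0 < \<alpha>" and a1: "\<alpha> < 1" and k0: "0 \<le> k" and g0: "0 < \<gamma>"
begin

definition Fc :: "real \<Rightarrow> real \<Rightarrow> real" where
  "Fc \<theta> y = (max (y-\<gamma>) 0) powr \<alpha> - k * (max (\<gamma>-y) 0) powr \<alpha> + \<theta> * (max y 0) powr \<alpha>"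

definition KK :: real where "KK = k powr (1/(1-\<alpha>))"
definition cl :: real where "cl = (1 + KK) powr (1-\<alpha>)"

lemma theta_low_eq: "theta_low \<alpha> k = - cl"
  by (simp add: theta_low_def cl_def KK_def)

lemma Fc_eq: "0 \<le> y \<Longrightarrow> Fc \<theta> y = Fobj \<alpha> k \<gamma> \<theta> y"
  by (cases "0 \<le> y - \<gamma>") (auto simp: Fc_def Fobj_def U_def max_def)

lemma Fc_ge: "\<gamma> \<le> y \<Longrightarrow> Fc \<theta> y = (y-\<gamma>) powr \<alpha> + \<theta> * y powr \<alpha>"
  using g0 by (auto simp: Fc_def max_def)

lemma Fc_le: "0 \<le> y \<Longrightarrow> y \<le> \<gamma> \<Longrightarrow> Fc \<theta> y = - k * (\<gamma>-y) powr \<alpha> + \<theta> * y powr \<alpha>"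
  by (auto simp: Fc_def max_def)

lemma Fc0: "Fc \<theta> 0 = - k * \<gamma> powr \<alpha>"
  using g0 by (simp add: Fc_def max_def)

lemma Fc_cont: "continuous_on UNIV (Fc \<theta>)"
proof -
  have p: "continuous_on UNIV (\<lambda>y. (max (f y) 0) powr \<alpha>)" if "continuous_on UNIV f" for f :: "real \<Rightarrow> real"
  proof (rule continuous_on_powr')
    show "continuous_on UNIV (\<lambda>y. max (f y) 0)" by (intro continuous_on_max that continuous_on_const)
  qed (use a0 in auto)
  have c1: "continuous_on UNIV (\<lambda>y::real. y - \<gamma>)" by (intro continuous_on_diff continuous_on_id continuous_on_const)
  have c2: "continuous_on UNIV (\<lambda>y::real. \<gamma> - y)" by (intro continuous_on_diff continuous_on_id continuous_on_const)
  have c3: "continuous_on UNIV (\<lambda>y::real. y)" by (rule continuous_on_id)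
  show ?thesis unfolding Fc_def[abs_def]
    by (intro continuous_on_add continuous_on_diff continuous_on_mult continuous_on_const p[OF c1] p[OF c2] p[OF c3])
qed

lemma Fc_growth:
  assumes y: "0 \<le> y"
  shows "Fc \<theta> y \<le> Fc \<theta> 0 + (1 + \<bar>\<theta>\<bar> + k) * y powr \<alpha>"
proof (cases "\<gamma> \<le> y")
  case True
  have "(y-\<gamma>) powr \<alpha> \<le> y powr \<alpha>" using True g0 a0 by (intro powr_mono2) auto
  moreover have "\<theta> * y powr \<alpha> \<le> \<bar>\<theta>\<bar> * y powr \<alpha>" by (intro mult_right_mono) auto
  moreover have "k * \<gamma> powr \<alpha> \<le> k * y powr \<alpha>" using True g0 a0 k0 by (intro mult_left_mono powr_mono2) auto
  moreover have "Fc \<theta> y = (y-\<gamma>) powr \<alpha> + \<theta> * y powr \<alpha>" using True by (simp add: Fc_ge)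
  moreover have "(1 + \<bar>\<theta>\<bar> + k) * y powr \<alpha> = y powr \<alpha> + \<bar>\<theta>\<bar> * y powr \<alpha> + k * y powr \<alpha>"
    by (simp add: algebra_simps)
  ultimately show ?thesis unfolding Fc0 by linarith
next
  case False
  have "\<gamma> powr \<alpha> \<le> (\<gamma>-y) powr \<alpha> + y powr \<alpha>"
    using powr_subadd[of \<alpha> "\<gamma>-y" y] False y a0 a1 by auto
  then have "k * \<gamma> powr \<alpha> \<le> k * (\<gamma>-y) powr \<alpha> + k * y powr \<alpha>"
    using k0 by (metis distrib_left mult_left_mono)
  moreover have "\<theta> * y powr \<alpha> \<le> \<bar>\<theta>\<bar> * y powr \<alpha>" by (intro mult_right_mono) auto
  moreover have "0 \<le> y powr \<alpha>" by simp
  moreover have "Fc \<theta> y = - k * (\<gamma>-y) powr \<alpha> + \<theta> * y powr \<alpha>" using False y by (simp add: Fc_le)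
  moreover have "(1 + \<bar>\<theta>\<bar> + k) * y powr \<alpha> = y powr \<alpha> + \<bar>\<theta>\<bar> * y powr \<alpha> + k * y powr \<alpha>"
    by (simp add: algebra_simps)
  ultimately show ?thesis unfolding Fc0 by linarith
qed

lemma Fc_bound:
  assumes y: "0 \<le> y"
  shows "\<bar>Fc \<theta> y\<bar> \<le> (1 + \<bar>\<theta>\<bar> + k * \<gamma> powr \<alpha>) * (1 + y powr \<alpha>)"
proof -
  have A: "0 \<le> (max (y-\<gamma>) 0) powr \<alpha>" "(max (y-\<gamma>) 0) powr \<alpha> \<le> y powr \<alpha>"
    using y g0 a0 by (auto intro!: powr_mono2)
  have B: "0 \<le> k * (max (\<gamma>-y) 0) powr \<alpha>" "k * (max (\<gamma>-y) 0) powr \<alpha> \<le> k * \<gamma> powr \<alpha>"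
    using y g0 a0 k0 by (auto intro!: powr_mono2 mult_left_mono)
  have C: "\<bar>\<theta> * (max y 0) powr \<alpha>\<bar> \<le> \<bar>\<theta>\<bar> * y powr \<alpha>" using y by (simp add: abs_mult)
  have D: "0 \<le> \<bar>\<theta>\<bar>" "0 \<le> k * \<gamma> powr \<alpha>" "0 \<le> y powr \<alpha>" "0 \<le> k * \<gamma> powr \<alpha> * y powr \<alpha>"
    "0 \<le> \<bar>\<theta>\<bar> * y powr \<alpha>" using k0 by auto
  define P where "P = (max (y-\<gamma>) 0) powr \<alpha>"
  define Q where "Q = k * (max (\<gamma>-y) 0) powr \<alpha>"
  define R where "R = \<theta> * (max y 0) powr \<alpha>"
  have e: "Fc \<theta> y = P - Q + R" by (simp add: Fc_def P_def Q_def R_def)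
  have r1: "R \<le> \<bar>R\<bar>" "- \<bar>R\<bar> \<le> R" by auto
  have "Fc \<theta> y \<le> y powr \<alpha> + k * \<gamma> powr \<alpha> + \<bar>\<theta>\<bar> * y powr \<alpha>"
    "- (y powr \<alpha> + k * \<gamma> powr \<alpha> + \<bar>\<theta>\<bar> * y powr \<alpha>) \<le> Fc \<theta> y"
    unfolding e using A B C r1 unfolding P_def[symmetric] Q_def[symmetric] R_def[symmetric] by linarith+
  then have "\<bar>Fc \<theta> y\<bar> \<le> y powr \<alpha> + k * \<gamma> powr \<alpha> + \<bar>\<theta>\<bar> * y powr \<alpha>"
    by (intro abs_leI) linarith+
  also have "\<dots> \<le> (1 + \<bar>\<theta>\<bar> + k * \<gamma> powr \<alpha>) * (1 + y powr \<alpha>)"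
  proof -
    have "(1 + \<bar>\<theta>\<bar> + k * \<gamma> powr \<alpha>) * (1 + y powr \<alpha>) = 1 + \<bar>\<theta>\<bar> + k * \<gamma> powr \<alpha> + y powr \<alpha> + \<bar>\<theta>\<bar> * y powr \<alpha> + k * \<gamma> powr \<alpha> * y powr \<alpha>"
      by (simp add: algebra_simps)
    then show ?thesis using D by linarith
  qed
  finally show ?thesis .
qed

end

context Fpar begin

lemma KK_nonneg: "0 \<le> KK" by (simp add: KK_def)

lemma k_eq: "k = KK powr (1-\<alpha>)"
proof (cases "k = 0")
  case True then show ?thesis unfolding KK_def by simp
next
  case False
  then have "k > 0" using k0 by simp
  then show ?thesis using a1 by (simp add: KK_def powr_powr)
qed

lemma cl_pos: "cl > 0" using KK_nonneg by (simp add: cl_def)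

lemma k_le_cl: "k \<le> cl"
proof -
  have "KK powr (1-\<alpha>) \<le> (1+KK) powr (1-\<alpha>)" using a1 KK_nonneg by (intro powr_mono2) auto
  then show ?thesis using k_eq by (simp add: cl_def)
qed

lemma holder2:
  assumes a: "0 \<le> a"
  shows "a powr \<alpha> + k * \<gamma> powr \<alpha> \<le> cl * (a+\<gamma>) powr \<alpha>"
proof (cases "k = 0")
  case True
  then have "cl = 1" unfolding cl_def KK_def by simp
  moreover have "a powr \<alpha> \<le> (a+\<gamma>) powr \<alpha>" using a g0 a0 by (intro powr_mono2) auto
  ultimately show ?thesis using True by simp
next
  case False
  then have K: "KK > 0" using k0 unfolding KK_def by simp
  define u where "u = (a+\<gamma>)/(1+KK)"
  have u: "u > 0" using a g0 K by (simp add: u_def)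
  have T1: "a powr \<alpha> \<le> \<alpha> * u powr (\<alpha>-1) * a + (1-\<alpha>) * u powr \<alpha>"
    by (rule tangent_powr[OF a0 a1 u a])
  have T2: "(\<gamma>/KK) powr \<alpha> \<le> \<alpha> * u powr (\<alpha>-1) * (\<gamma>/KK) + (1-\<alpha>) * u powr \<alpha>"
    by (rule tangent_powr[OF a0 a1 u]) (use g0 K in simp)
  have "KK * (\<gamma>/KK) powr \<alpha> \<le> KK * (\<alpha> * u powr (\<alpha>-1) * (\<gamma>/KK) + (1-\<alpha>) * u powr \<alpha>)"
    using T2 K by (intro mult_left_mono) auto
  also have "\<dots> = \<alpha> * u powr (\<alpha>-1) * \<gamma> + KK * (1-\<alpha>) * u powr \<alpha>"
    using K by (simp add: field_simps)
  also have "KK * (\<gamma>/KK) powr \<alpha> = k * \<gamma> powr \<alpha>"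
  proof -
    have e1: "(\<gamma>/KK) powr \<alpha> = \<gamma> powr \<alpha> / KK powr \<alpha>"
      using K g0 by (meson powr_divide less_imp_le)
    have "KK * (\<gamma>/KK) powr \<alpha> = KK powr 1 * KK powr (-\<alpha>) * \<gamma> powr \<alpha>"
      unfolding e1 using K by (simp add: powr_minus_divide)
    also have "KK powr 1 * KK powr (-\<alpha>) = KK powr (1-\<alpha>)"
      using powr_add[of KK 1 "-\<alpha>"] by simp
    finally show ?thesis using k_eq by simp
  qed
  finally have T2': "k * \<gamma> powr \<alpha> \<le> \<alpha> * u powr (\<alpha>-1) * \<gamma> + KK * (1-\<alpha>) * u powr \<alpha>" .
  have "a powr \<alpha> + k * \<gamma> powr \<alpha> \<le> \<alpha> * u powr (\<alpha>-1) * (a+\<gamma>) + (1+KK) * (1-\<alpha>) * u powr \<alpha>"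
    using T1 T2' by (simp add: algebra_simps)
  also have "\<alpha> * u powr (\<alpha>-1) * (a+\<gamma>) = \<alpha> * (1+KK) * u powr \<alpha>"
  proof -
    have "a + \<gamma> = (1+KK) * u" using K by (simp add: u_def)
    moreover have "u powr (\<alpha>-1) * u = u powr \<alpha>"
      using powr_add[of u "\<alpha>-1" 1] u by simp
    ultimately show ?thesis by (metis mult.assoc mult.commute)
  qed
  also have "\<alpha> * (1+KK) * u powr \<alpha> + (1+KK) * (1-\<alpha>) * u powr \<alpha> = (1+KK) * u powr \<alpha>"
    by (simp add: algebra_simps)
  also have "(1+KK) * u powr \<alpha> = cl * (a+\<gamma>) powr \<alpha>"
  proof -
    have e1: "u powr \<alpha> = (a+\<gamma>) powr \<alpha> / (1+KK) powr \<alpha>"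
      unfolding u_def using K a g0 by (meson powr_divide less_imp_le add_nonneg_nonneg divide_nonneg_nonneg)
    have "(1+KK) * u powr \<alpha> = (1+KK) powr 1 * (1+KK) powr (-\<alpha>) * (a+\<gamma>) powr \<alpha>"
      unfolding e1 using K by (simp add: powr_minus_divide)
    also have "(1+KK) powr 1 * (1+KK) powr (-\<alpha>) = (1+KK) powr (1-\<alpha>)"
      using powr_add[of "1+KK" 1 "-\<alpha>"] by simp
    finally show ?thesis by (simp add: cl_def)
  qed
  finally show ?thesis .
qed

lemma Fc_part2:
  assumes y: "0 \<le> y"
  shows "Fc \<theta> y \<le> Fc \<theta> 0 + (\<theta> + cl) * y powr \<alpha>"
proof (cases "\<gamma> \<le> y")
  case True
  have "(y-\<gamma>) powr \<alpha> + k * \<gamma> powr \<alpha> \<le> cl * y powr \<alpha>"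
    using holder2[of "y-\<gamma>"] True by simp
  moreover have "Fc \<theta> y = (y-\<gamma>) powr \<alpha> + \<theta> * y powr \<alpha>" using True by (simp add: Fc_ge)
  ultimately show ?thesis unfolding Fc0 by (simp add: algebra_simps)
next
  case False
  have "\<gamma> powr \<alpha> \<le> (\<gamma>-y) powr \<alpha> + y powr \<alpha>"
    using powr_subadd[of \<alpha> "\<gamma>-y" y] False y a0 a1 by auto
  then have "k * \<gamma> powr \<alpha> \<le> k * (\<gamma>-y) powr \<alpha> + k * y powr \<alpha>"
    using k0 by (metis distrib_left mult_left_mono)
  moreover have "k * y powr \<alpha> \<le> cl * y powr \<alpha>" using k_le_cl by (intro mult_right_mono) auto
  moreover have "Fc \<theta> y = - k * (\<gamma>-y) powr \<alpha> + \<theta> * y powr \<alpha>" using False y by (simp add: Fc_le)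
  ultimately show ?thesis unfolding Fc0 by (simp add: algebra_simps)
qed

end

lemma powr_ge_self:
  fixes a x :: real
  assumes "0 < a" "a \<le> 1" "0 \<le> x" "x \<le> 1"
  shows "x \<le> x powr a"
  using powr_mono'[of a 1 x] assms by simp

context Fpar begin

lemma Fc_unbounded:
  assumes th: "\<theta> > -1"
  shows "\<exists>y\<ge>0. Fc \<theta> y > M0"
proof -
  define y where "y = max \<gamma> (((\<bar>M0\<bar> + \<gamma> powr \<alpha> + 1)/(1+\<theta>)) powr (1/\<alpha>))"
  have yg: "\<gamma> \<le> y" by (simp add: y_def)
  have "((\<bar>M0\<bar> + \<gamma> powr \<alpha> + 1)/(1+\<theta>)) powr (1/\<alpha>) \<le> y" by (simp add: y_def)
  then have "(((\<bar>M0\<bar> + \<gamma> powr \<alpha> + 1)/(1+\<theta>)) powr (1/\<alpha>)) powr \<alpha> \<le> y powr \<alpha>"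
    using a0 by (intro powr_mono2) auto
  moreover have "(((\<bar>M0\<bar> + \<gamma> powr \<alpha> + 1)/(1+\<theta>)) powr (1/\<alpha>)) powr \<alpha> = (\<bar>M0\<bar> + \<gamma> powr \<alpha> + 1)/(1+\<theta>)"
    using a0 th by (simp add: powr_powr add_pos_nonneg)
  ultimately have "(\<bar>M0\<bar> + \<gamma> powr \<alpha> + 1)/(1+\<theta>) \<le> y powr \<alpha>" by simp
  then have big: "\<bar>M0\<bar> + \<gamma> powr \<alpha> + 1 \<le> (1+\<theta>) * y powr \<alpha>"
    using th by (simp add: pos_divide_le_eq mult.commute)
  have "y powr \<alpha> \<le> (y-\<gamma>) powr \<alpha> + \<gamma> powr \<alpha>"
    using powr_subadd[of \<alpha> "y-\<gamma>" \<gamma>] yg g0 a0 a1 by auto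
  then have "(1+\<theta>) * y powr \<alpha> - \<gamma> powr \<alpha> \<le> Fc \<theta> y"
    using yg by (simp add: Fc_ge algebra_simps)
  then have "Fc \<theta> y > M0" using big by linarith
  moreover have "0 \<le> y" using yg g0 by simp
  ultimately show ?thesis by blast
qed

lemma Fc_beats_zero:
  assumes th: "\<theta> > -cl" and kp: "k > 0"
  shows "\<exists>y\<ge>0. Fc \<theta> y > Fc \<theta> 0"
proof -
  have K: "KK > 0" using kp unfolding KK_def by simp
  define yh where "yh = \<gamma> + \<gamma>/KK"
  have gK: "0 < \<gamma>/KK" using K g0 by simp
  then have yh: "\<gamma> \<le> yh" "0 < yh" using g0 by (auto simp: yh_def)
  define g where "g = \<gamma> powr \<alpha>"
  define P where "P = KK powr \<alpha>"
  have P: "P > 0" using K by (simp add: P_def)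
  have e1: "(\<gamma>/KK) powr \<alpha> = g / P"
    unfolding g_def P_def using K g0 by (meson powr_divide less_imp_le)
  have e2: "KK / P = k"
  proof -
    have "KK powr (1-\<alpha>) = KK powr 1 / KK powr \<alpha>" by (rule powr_diff)
    also have "KK powr 1 = KK" using K by simp
    finally have "KK powr (1-\<alpha>) = KK / P" by (simp only: P_def)
    then show ?thesis using k_eq by simp
  qed
  have yh_eq: "yh = ((1+KK) * \<gamma>) / KK" using K unfolding yh_def by (simp add: field_simps)
  have e3: "yh powr \<alpha> = (1+KK) powr \<alpha> * g / P"
  proof -
    have nn: "0 \<le> (1+KK) * \<gamma>" using K g0 by simp
    have "yh powr \<alpha> = ((1+KK) * \<gamma>) powr \<alpha> / P"
      unfolding yh_eq P_def using nn K by (meson powr_divide less_imp_le)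
    also have "((1+KK) * \<gamma>) powr \<alpha> = (1+KK) powr \<alpha> * g"
      unfolding g_def using K g0 by (meson powr_mult less_imp_le add_nonneg_nonneg zero_le_one)
    finally show ?thesis by simp
  qed
  have e4: "cl * (1+KK) powr \<alpha> = 1 + KK"
  proof -
    have "(1+KK) powr (1-\<alpha>) * (1+KK) powr \<alpha> = (1+KK) powr ((1-\<alpha>) + \<alpha>)"
      by (rule powr_add[symmetric])
    also have "\<dots> = 1 + KK" using K by simp
    finally show ?thesis by (simp only: cl_def)
  qed
  have eq: "(\<gamma>/KK) powr \<alpha> + k * \<gamma> powr \<alpha> = cl * yh powr \<alpha>"
  proof -
    have "(\<gamma>/KK) powr \<alpha> + k * \<gamma> powr \<alpha> = g / P + KK / P * g"
      unfolding e1 e2 g_def ..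
    also have "\<dots> = (1+KK) * g / P" by (simp add: add_divide_distrib distrib_right)
    also have "\<dots> = (cl * (1+KK) powr \<alpha>) * g / P" by (simp only: e4)
    also have "\<dots> = cl * yh powr \<alpha>" unfolding e3 by simp
    finally show ?thesis .
  qed
  have f1: "Fc \<theta> yh = (\<gamma>/KK) powr \<alpha> + \<theta> * yh powr \<alpha>"
  proof -
    have "yh - \<gamma> = \<gamma>/KK" by (simp add: yh_def)
    then show ?thesis using Fc_ge[OF yh(1), of \<theta>] by simp
  qed
  have f2: "(\<theta> + cl) * yh powr \<alpha> > 0" using th yh by simp
  have "Fc \<theta> yh > Fc \<theta> 0"
  proof -
    have "Fc \<theta> yh = - k * \<gamma> powr \<alpha> + (\<theta> + cl) * yh powr \<alpha>"
      using f1 eq by (simp add: distrib_right)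
    then show ?thesis using f2 unfolding Fc0 by linarith
  qed
  then show ?thesis using yh by (intro exI[of _ yh]) auto
qed

lemma Fc_beats_gamma:
  assumes th: "\<theta> < 0"
  shows "\<exists>y\<ge>0. Fc \<theta> y > Fc \<theta> \<gamma>"
proof -
  define K' where "K' = - \<theta> * \<alpha> * \<gamma> powr (\<alpha>-1)"
  have "0 < - \<theta> * \<alpha>" using th a0 by (simp add: mult_neg_pos)
  moreover have "0 < \<gamma> powr (\<alpha>-1)" using g0 by simp
  ultimately have K': "K' > 0" unfolding K'_def by (rule mult_pos_pos)
  define e where "e = ((1/2)/K') powr (1/(1-\<alpha>))"
  have e: "e > 0" using K' by (simp add: e_def)
  have "K' * e \<le> (1/2) * e powr \<alpha>"
    using small_ratio_gen[OF a0 a1 K' e, of "1/2"] by (simp add: e_def)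
  moreover have "e powr \<alpha> > 0" using e by simp
  ultimately have small: "K' * e < e powr \<alpha>" by linarith
  have "(\<gamma>+e) powr \<alpha> \<le> \<alpha> * \<gamma> powr (\<alpha>-1) * (\<gamma>+e) + (1-\<alpha>) * \<gamma> powr \<alpha>"
    using tangent_powr[OF a0 a1 g0, of "\<gamma>+e"] e g0 by simp
  also have "\<alpha> * \<gamma> powr (\<alpha>-1) * (\<gamma>+e) = \<alpha> * \<gamma> powr \<alpha> + \<alpha> * \<gamma> powr (\<alpha>-1) * e"
  proof -
    have "\<gamma> powr (\<alpha>-1) * \<gamma> = \<gamma> powr \<alpha>" using powr_add[of \<gamma> "\<alpha>-1" 1] g0 by simp
    then show ?thesis by (simp add: algebra_simps)
  qed
  finally have "(\<gamma>+e) powr \<alpha> \<le> \<gamma> powr \<alpha> + \<alpha> * \<gamma> powr (\<alpha>-1) * e" by (simp add: algebra_simps)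
  then have "\<theta> * (\<gamma> powr \<alpha> + \<alpha> * \<gamma> powr (\<alpha>-1) * e) \<le> \<theta> * (\<gamma>+e) powr \<alpha>"
    using th by (intro mult_left_mono_neg) auto
  then have "\<theta> * \<gamma> powr \<alpha> - K' * e \<le> \<theta> * (\<gamma>+e) powr \<alpha>"
    by (simp add: K'_def algebra_simps)
  moreover have "Fc \<theta> (\<gamma>+e) = e powr \<alpha> + \<theta> * (\<gamma>+e) powr \<alpha>" using e by (simp add: Fc_ge)
  moreover have "Fc \<theta> \<gamma> = \<theta> * \<gamma> powr \<alpha>" by (simp add: Fc_ge)
  ultimately have "Fc \<theta> (\<gamma>+e) > Fc \<theta> \<gamma>" using small by linarith
  then show ?thesis using e g0 by (intro exI[of _ "\<gamma>+e"]) auto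
qed

lemma Fc_chord:
  assumes th: "\<theta> \<le> 0" and y: "0 \<le> y" "y \<le> \<gamma>"
  shows "Fc \<theta> y \<le> max (Fc \<theta> 0) (Fc \<theta> \<gamma>)"
proof -
  define s where "s = y/\<gamma>"
  have s: "0 \<le> s" "s \<le> 1" using y g0 by (auto simp: s_def)
  have ys: "y = s * \<gamma>" "\<gamma> - y = (1-s) * \<gamma>" using g0 by (auto simp: s_def field_simps)
  have p1: "(\<gamma>-y) powr \<alpha> \<ge> (1-s) * \<gamma> powr \<alpha>"
  proof -
    have "(1-s) \<le> (1-s) powr \<alpha>" using s a0 a1 by (intro powr_ge_self) auto
    then have "(1-s) * \<gamma> powr \<alpha> \<le> (1-s) powr \<alpha> * \<gamma> powr \<alpha>" by (intro mult_right_mono) auto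
    also have "\<dots> = ((1-s) * \<gamma>) powr \<alpha>" using s g0 by (simp add: powr_mult)
    also have "(1-s) * \<gamma> = \<gamma> - y" using ys(2) by simp
    finally show ?thesis .
  qed
  have p2: "y powr \<alpha> \<ge> s * \<gamma> powr \<alpha>"
  proof -
    have "s \<le> s powr \<alpha>" using s a0 a1 by (intro powr_ge_self) auto
    then have "s * \<gamma> powr \<alpha> \<le> s powr \<alpha> * \<gamma> powr \<alpha>" by (intro mult_right_mono) auto
    also have "\<dots> = (s * \<gamma>) powr \<alpha>" using s g0 by (simp add: powr_mult)
    also have "s * \<gamma> = y" using ys(1) by simp
    finally show ?thesis .
  qed
  have "- k * (\<gamma>-y) powr \<alpha> \<le> - k * ((1-s) * \<gamma> powr \<alpha>)"
    using p1 k0 by (simp add: mult_left_mono)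
  moreover have "\<theta> * y powr \<alpha> \<le> \<theta> * (s * \<gamma> powr \<alpha>)"
    using p2 th by (intro mult_left_mono_neg) auto
  moreover have "Fc \<theta> y = - k * (\<gamma>-y) powr \<alpha> + \<theta> * y powr \<alpha>" using y by (simp add: Fc_le)
  moreover have "(1-s) * Fc \<theta> 0 + s * Fc \<theta> \<gamma> = - k * ((1-s) * \<gamma> powr \<alpha>) + \<theta> * (s * \<gamma> powr \<alpha>)"
    by (simp add: Fc0 Fc_ge algebra_simps)
  ultimately have "Fc \<theta> y \<le> (1-s) * Fc \<theta> 0 + s * Fc \<theta> \<gamma>"
    by linarith
  also have "\<dots> \<le> (1-s) * max (Fc \<theta> 0) (Fc \<theta> \<gamma>) + s * max (Fc \<theta> 0) (Fc \<theta> \<gamma>)"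
    using s by (intro add_mono mult_left_mono) auto
  also have "\<dots> = max (Fc \<theta> 0) (Fc \<theta> \<gamma>)" by (simp add: algebra_simps)
  finally show ?thesis .
qed

end

lemma powr_inj_base:
  fixes x y e :: real
  assumes "x > 0" "y > 0" "e \<noteq> 0" "x powr e = y powr e"
  shows "x = y"
proof -
  have "(x powr e) powr (1/e) = (y powr e) powr (1/e)" using assms by simp
  moreover have "(x powr e) powr (1/e) = x" using powr_powr[of x e "1/e"] assms by simp
  moreover have "(y powr e) powr (1/e) = y" using powr_powr[of y e "1/e"] assms by simp
  ultimately show ?thesis by simp
qed

context Fpar begin

lemma Fc_crit:
  assumes a: "\<gamma> < a" and mx: "\<forall>x\<ge>0. Fc \<theta> x \<le> Fc \<theta> a"
  shows "(a-\<gamma>) powr (\<alpha>-1) + \<theta> * a powr (\<alpha>-1) = 0"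
proof -
  define G where "G y = (y-\<gamma>) powr \<alpha> + \<theta> * y powr \<alpha>" for y
  have ag: "a - \<gamma> > 0" "a > 0" using a g0 by auto
  have d1: "((\<lambda>y. (y-\<gamma>) powr \<alpha>) has_real_derivative \<alpha> * (a-\<gamma>) powr (\<alpha>-1) * 1) (at a)"
  proof -
    have dd: "((\<lambda>y. y - \<gamma>) has_real_derivative 1) (at a)" by (auto intro!: derivative_eq_intros)
    have "((\<lambda>z. z powr \<alpha>) has_real_derivative \<alpha> * (a-\<gamma>) powr (\<alpha>-1)) (at ((\<lambda>y. y-\<gamma>) a))"
      using has_real_derivative_powr[OF ag(1), of \<alpha>] by simp
    from DERIV_chain2[OF this dd] show ?thesis by simp
  qed
  have d2: "((\<lambda>y. y powr \<alpha>) has_real_derivative \<alpha> * a powr (\<alpha>-1)) (at a)"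
    by (rule has_real_derivative_powr[OF ag(2)])
  have dG: "(G has_real_derivative (\<alpha> * (a-\<gamma>) powr (\<alpha>-1) * 1 + \<theta> * (\<alpha> * a powr (\<alpha>-1)))) (at a)"
    unfolding G_def[abs_def] by (intro DERIV_add d1 DERIV_cmult d2)
  have "\<alpha> * (a-\<gamma>) powr (\<alpha>-1) * 1 + \<theta> * (\<alpha> * a powr (\<alpha>-1)) = 0"
  proof (rule DERIV_local_max[OF dG])
    show "0 < a - \<gamma>" using ag by simp
    show "\<forall>y. \<bar>a - y\<bar> < a - \<gamma> \<longrightarrow> G y \<le> G a"
    proof (intro allI impI)
      fix y assume "\<bar>a - y\<bar> < a - \<gamma>"
      then have y: "\<gamma> < y" by auto
      have "G y = Fc \<theta> y" using y by (simp add: G_def Fc_ge)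
      also have "\<dots> \<le> Fc \<theta> a" using mx y g0 by auto
      also have "\<dots> = G a" using a by (simp add: G_def Fc_ge)
      finally show "G y \<le> G a" .
    qed
  qed
  then have "\<alpha> * ((a-\<gamma>) powr (\<alpha>-1) + \<theta> * a powr (\<alpha>-1)) = 0" by (simp add: algebra_simps)
  then show ?thesis using a0 by simp
qed

lemma Fc_uniq:
  assumes th: "\<theta> > -cl" and a: "0 \<le> a" "\<forall>x\<ge>0. Fc \<theta> x \<le> Fc \<theta> a"
    and b: "0 \<le> b" "\<forall>x\<ge>0. Fc \<theta> x \<le> Fc \<theta> b"
  shows "a = b"
proof -
  have th1: "\<theta> \<le> -1"
  proof (rule ccontr)
    assume "\<not> \<theta> \<le> -1"
    then obtain y where "y \<ge> 0" "Fc \<theta> y > Fc \<theta> a" using Fc_unbounded[of \<theta> "Fc \<theta> a"] by auto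
    then show False using a by auto
  qed
  have kp: "k > 0"
  proof (rule ccontr)
    assume "\<not> k > 0"
    then have "k = 0" using k0 by simp
    then have "cl = 1" unfolding cl_def KK_def by simp
    then show False using th th1 by simp
  qed
  have thn: "\<theta> < 0" using th1 by simp
  obtain y1 where y1: "y1 \<ge> 0" "Fc \<theta> y1 > Fc \<theta> 0" using Fc_beats_zero[OF th kp] by auto
  obtain y2 where y2: "y2 \<ge> 0" "Fc \<theta> y2 > Fc \<theta> \<gamma>" using Fc_beats_gamma[OF thn] by auto
  have big: "\<gamma> < c" if c: "0 \<le> c" "\<forall>x\<ge>0. Fc \<theta> x \<le> Fc \<theta> c" for c
  proof (rule ccontr)
    assume "\<not> \<gamma> < c"
    then have "Fc \<theta> c \<le> max (Fc \<theta> 0) (Fc \<theta> \<gamma>)" using Fc_chord[of \<theta> c] thn c by auto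
    moreover have "Fc \<theta> y1 \<le> Fc \<theta> c" "Fc \<theta> y2 \<le> Fc \<theta> c" using c y1 y2 by auto
    ultimately show False using y1 y2 by linarith
  qed
  have ratio: "((c-\<gamma>)/c) powr (\<alpha>-1) = -\<theta>" if c: "0 \<le> c" "\<forall>x\<ge>0. Fc \<theta> x \<le> Fc \<theta> c" for c
  proof -
    have cg: "\<gamma> < c" by (rule big[OF c])
    then have cp: "c > 0" using g0 by simp
    have "(c-\<gamma>) powr (\<alpha>-1) = -\<theta> * c powr (\<alpha>-1)" using Fc_crit[OF cg c(2)] by simp
    moreover have "((c-\<gamma>)/c) powr (\<alpha>-1) = (c-\<gamma>) powr (\<alpha>-1) / c powr (\<alpha>-1)"
      using cg cp by (meson powr_divide less_imp_le diff_ge_0_iff_ge)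
    ultimately show ?thesis using cp by simp
  qed
  have ag: "\<gamma> < a" "\<gamma> < b" using big a b by auto
  have "(a-\<gamma>)/a = (b-\<gamma>)/b"
  proof (rule powr_inj_base)
    show "(a-\<gamma>)/a > 0" "(b-\<gamma>)/b > 0" using ag g0 by auto
    show "\<alpha> - 1 \<noteq> 0" using a1 by simp
    show "((a-\<gamma>)/a) powr (\<alpha>-1) = ((b-\<gamma>)/b) powr (\<alpha>-1)" using ratio[OF a] ratio[OF b] by simp
  qed
  then have "(a-\<gamma>) * b = (b-\<gamma>) * a" using ag g0 by (simp add: field_simps)
  then have "\<gamma> * a = \<gamma> * b" by (simp add: algebra_simps)
  then show ?thesis using g0 by simp
qed

end

lemma normal_exp_identity:
  fixes s c x :: real
  assumes "s > 0"
  shows "normal_density 0 s x * exp (c * x) = exp (c^2 * s^2 / 2) * normal_density (c * s^2) s x"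
proof -
  have "-(x - 0)\<^sup>2 / (2 * s\<^sup>2) + c * x = c^2 * s^2 / 2 + (-(x - c * s^2)\<^sup>2 / (2 * s\<^sup>2))"
    using assms by (simp add: field_simps power2_eq_square)
  then have "exp (-(x - 0)\<^sup>2 / (2 * s\<^sup>2)) * exp (c * x) = exp (c^2 * s^2 / 2) * exp (-(x - c * s^2)\<^sup>2 / (2 * s\<^sup>2))"
    by (simp add: exp_add[symmetric])
  then show ?thesis unfolding normal_density_def by (simp add: mult.assoc mult.left_commute)
qed

locale bm_setting =
  fixes M :: "'a measure" and B :: "real \<Rightarrow> 'a \<Rightarrow> real" and \<tau> \<phi> r :: real
  assumes bm: "std_brownian_motion M B" and tau: "\<tau> > 0" and phi: "\<phi> \<noteq> 0"
begin

lemma prob: "prob_space M" using bm by (simp add: std_brownian_motion_def)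

lemma Bmeas[measurable]: "B \<tau> \<in> borel_measurable M"
  using bm tau by (simp add: std_brownian_motion_def)

lemma Bdist: "distributed M lborel (B \<tau>) (normal_density 0 (sqrt \<tau>))"
proof -
  have d: "distributed M lborel (\<lambda>\<omega>. B \<tau> \<omega> - B 0 \<omega>) (normal_density 0 (sqrt (\<tau> - 0)))"
    using bm tau unfolding std_brownian_motion_def by blast
  have B0: "\<And>\<omega>. \<omega> \<in> space M \<Longrightarrow> B 0 \<omega> = 0" using bm by (simp add: std_brownian_motion_def)
  have "distr M lborel (\<lambda>\<omega>. B \<tau> \<omega> - B 0 \<omega>) = distr M lborel (B \<tau>)"
    by (rule distr_cong) (auto simp: B0)
  then show ?thesis using d Bmeas by (simp add: distributed_def)
qed

lemma exp_int: "integrable M (\<lambda>\<omega>. exp (c * B \<tau> \<omega>))"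
proof -
  have i1: "integrable lborel (\<lambda>x. exp (c^2 * (sqrt \<tau>)^2 / 2) * normal_density (c * (sqrt \<tau>)^2) (sqrt \<tau>) x)"
    by (rule integrable_mult_right, rule integrable_normal_density) (use tau in simp)
  have "integrable lborel (\<lambda>x. normal_density 0 (sqrt \<tau>) x * exp (c * x))"
  proof -
    have "(\<lambda>x. normal_density 0 (sqrt \<tau>) x * exp (c * x)) =
          (\<lambda>x. exp (c^2 * (sqrt \<tau>)^2 / 2) * normal_density (c * (sqrt \<tau>)^2) (sqrt \<tau>) x)"
      using normal_exp_identity[of "sqrt \<tau>" _ c] tau by (intro ext) simp
    then show ?thesis using i1 by simp
  qed
  then show ?thesis
    using distributed_integrable[OF Bdist, of "\<lambda>x. exp (c * x)"] by simp
qed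

lemma B_atom:
  assumes S: "countable S"
  shows "AE \<omega> in M. B \<tau> \<omega> \<notin> S"
proof -
  have Sn: "S \<in> null_sets lborel" by (rule countable_imp_null_set_lborel[OF S])
  then have Ss: "S \<in> sets borel" by auto
  have "emeasure M (B \<tau> -` S \<inter> space M) = (\<integral>\<^sup>+x. ennreal (normal_density 0 (sqrt \<tau>) x) * indicator S x \<partial>lborel)"
    using distributed_emeasure[OF Bdist, of S] Ss by simp
  also have "\<dots> = 0"
  proof (rule nn_integral_0_iff_AE[THEN iffD2])
    show "(\<lambda>x. ennreal (normal_density 0 (sqrt \<tau>) x) * indicator S x) \<in> borel_measurable lborel"
      using Ss by measurable
    have "AE x in lborel. x \<notin> S" using Sn by (rule AE_not_in)
    then show "AE x in lborel. ennreal (normal_density 0 (sqrt \<tau>) x) * indicator S x = 0"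
      by (rule eventually_mono) simp
  qed
  finally have "B \<tau> -` S \<inter> space M \<in> null_sets M"
    using Ss by (auto intro!: null_setsI)
  then show ?thesis by (rule AE_I') auto
qed

definition NN where "NN = aug_filtration M B \<tau>"
definition ZZ where "ZZ = pricing_kernel B \<phi> r \<tau>"

lemma gen_sub: "{B s -` A \<inter> space M | s A. 0 \<le> s \<and> s \<le> \<tau> \<and> A \<in> sets borel} \<union> null_sets M \<subseteq> sets M"
  using bm by (auto simp: std_brownian_motion_def)

lemma sets_NN: "sets NN = sigma_sets (space M)
   ({B s -` A \<inter> space M | s A. 0 \<le> s \<and> s \<le> \<tau> \<and> A \<in> sets borel} \<union> null_sets M)"
proof -
  have "{B s -` A \<inter> space M | s A. 0 \<le> s \<and> s \<le> \<tau> \<and> A \<in> sets borel} \<union> null_sets M \<subseteq> Pow (space M)"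
    using gen_sub sets.sets_into_space by blast
  then show ?thesis unfolding NN_def aug_filtration_def by (simp add: sets_measure_of_conv)
qed

lemma space_NN: "space NN = space M"
  unfolding NN_def aug_filtration_def by (simp add: space_measure_of_conv)

lemma sub_NN: "sets NN \<subseteq> sets M"
  unfolding sets_NN by (rule sets.sigma_sets_subset[OF gen_sub])

lemma B_measN[measurable]: "B \<tau> \<in> borel_measurable NN"
  unfolding measurable_def
proof (intro CollectI conjI ballI)
  show "B \<tau> \<in> space NN \<rightarrow> space borel" by simp
  fix A :: "real set" assume A: "A \<in> sets borel"
  have "B \<tau> -` A \<inter> space M \<in> {B s -` A \<inter> space M | s A. 0 \<le> s \<and> s \<le> \<tau> \<and> A \<in> sets borel} \<union> null_sets M"
  proof (rule UnI1, rule CollectI, intro exI conjI)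
    show "B \<tau> -` A \<inter> space M = B \<tau> -` A \<inter> space M" ..
  qed (use A tau in auto)
  then show "B \<tau> -` A \<inter> space NN \<in> sets NN"
    unfolding sets_NN space_NN by (rule sigma_sets.Basic)
qed

lemma ZZ_eq: "ZZ \<omega> = exp (- \<phi> * B \<tau> \<omega> - (r + \<phi>\<^sup>2 / 2) * \<tau>)"
  by (simp add: ZZ_def pricing_kernel_def)

lemma ZZ_measN: "ZZ \<in> borel_measurable NN"
  unfolding ZZ_eq[abs_def] by measurable

lemma ZZ_pos: "ZZ \<omega> > 0" by (simp add: ZZ_eq)

lemma ZZ_powr_int: "integrable M (\<lambda>\<omega>. ZZ \<omega> powr e)"
proof -
  define c' where "c' = - e * \<phi>"
  have eq: "ZZ \<omega> powr e = exp (- e * (r + \<phi>\<^sup>2 / 2) * \<tau>) * exp (c' * B \<tau> \<omega>)" for \<omega>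
    by (simp add: ZZ_eq powr_def exp_add[symmetric] algebra_simps c'_def)
  show ?thesis unfolding eq using exp_int[of c'] by (intro integrable_mult_right) auto
qed

lemma ZZ_int: "integrable M ZZ"
proof -
  have "(\<lambda>\<omega>. ZZ \<omega> powr 1) = ZZ" using ZZ_pos by (auto simp: fun_eq_iff less_imp_le)
  then show ?thesis using ZZ_powr_int[of 1] by simp
qed

lemma ZZ_atom:
  assumes S: "countable S"
  shows "AE \<omega> in M. ZZ \<omega> \<notin> S"
proof -
  define h where "h x = exp (- \<phi> * x - (r + \<phi>\<^sup>2 / 2) * \<tau>)" for x
  have inj: "inj h" unfolding h_def using phi by (auto simp: inj_def)
  have "countable (h -` S)"
  proof (rule countable_image_inj_on)
    show "countable (h ` (h -` S))" using S by (rule countable_subset[rotated]) auto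
    show "inj_on h (h -` S)" using inj by (auto simp: inj_on_def inj_def)
  qed
  from B_atom[OF this] show ?thesis
    by (rule eventually_mono) (simp add: ZZ_eq h_def)
qed

end

lemma opt_inst:
  assumes bm: "std_brownian_motion M B" and tau: "\<tau> > 0" and phi: "\<phi> \<noteq> 0"
    and a0: "0 < \<alpha>" and a1: "\<alpha> < 1" and k0: "0 \<le> k" and g0: "0 < \<gamma>"
  shows "opt (Fpar.Fc \<alpha> k \<gamma> \<theta>) \<alpha> (1 + \<bar>\<theta>\<bar> + k) M (aug_filtration M B \<tau>) (pricing_kernel B \<phi> r \<tau>)
           (1 + \<bar>\<theta>\<bar> + k * \<gamma> powr \<alpha>)"
proof -
  interpret F: Fpar \<alpha> k \<gamma> by unfold_locales (use a0 a1 k0 g0 in auto)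
  interpret S: bm_setting M B \<tau> \<phi> r by unfold_locales (use bm tau phi in auto)
  interpret P: prob_space M by (rule S.prob)
  show ?thesis
    unfolding S.NN_def[symmetric] S.ZZ_def[symmetric]
  proof (unfold_locales)
    show "0 < \<alpha>" "\<alpha> < 1" by (rule a0, rule a1)
    show "0 < 1 + \<bar>\<theta>\<bar> + k" using k0 by simp
    show "continuous_on UNIV (F.Fc \<theta>)" by (rule F.Fc_cont)
    show "\<And>y. 0 \<le> y \<Longrightarrow> F.Fc \<theta> y \<le> F.Fc \<theta> 0 + (1 + \<bar>\<theta>\<bar> + k) * y powr \<alpha>" by (rule F.Fc_growth)
    show "sets S.NN \<subseteq> sets M" by (rule S.sub_NN)
    show "space S.NN = space M" by (rule S.space_NN)
    show "S.ZZ \<in> borel_measurable S.NN" by (rule S.ZZ_measN)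
    show "\<And>\<omega>. \<omega> \<in> space M \<Longrightarrow> 0 < S.ZZ \<omega>" by (rule S.ZZ_pos)
    show "integrable M S.ZZ" by (rule S.ZZ_int)
    show "integrable M (\<lambda>\<omega>. S.ZZ \<omega> powr - (\<alpha> / (1 - \<alpha>)))" by (rule S.ZZ_powr_int)
    show "\<And>S. countable S \<Longrightarrow> AE \<omega> in M. S.ZZ \<omega> \<notin> S" by (rule S.ZZ_atom)
    show "\<And>y. 0 \<le> y \<Longrightarrow> \<bar>F.Fc \<theta> y\<bar> \<le> (1 + \<bar>\<theta>\<bar> + k * \<gamma> powr \<alpha>) * (1 + y powr \<alpha>)" by (rule F.Fc_bound)
  qed
qed

lemma Adm_eq:
  assumes "opt F \<alpha> C M (aug_filtration M B \<tau>) (pricing_kernel B \<phi> r \<tau>) D"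
  shows "opt.Adm M (aug_filtration M B \<tau>) (pricing_kernel B \<phi> r \<tau>) = admissible M B \<phi> r \<tau>"
  unfolding opt.Adm_def[OF assms] admissible_def by simp

lemma argmax_eq:
  assumes inst: "opt (Fpar.Fc \<alpha> k \<gamma> \<theta>) \<alpha> C M (aug_filtration M B \<tau>) (pricing_kernel B \<phi> r \<tau>) D"
    and FP: "Fpar \<alpha> k \<gamma>"
  shows "Y \<in> argmax_set M B \<phi> r \<tau> \<alpha> k \<gamma> \<theta> \<longleftrightarrow>
         opt.isMax (Fpar.Fc \<alpha> k \<gamma> \<theta>) M (aug_filtration M B \<tau>) (pricing_kernel B \<phi> r \<tau>) Y"
proof -
  have int_eq: "(\<integral>\<omega>. Fobj \<alpha> k \<gamma> \<theta> (Y' \<omega>) \<partial>M) = (\<integral>\<omega>. Fpar.Fc \<alpha> k \<gamma> \<theta> (Y' \<omega>) \<partial>M)"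
    if "Y' \<in> admissible M B \<phi> r \<tau>" for Y'
    using that Fpar.Fc_eq[OF FP] by (intro Bochner_Integration.integral_cong) (auto simp: admissible_def)
  show ?thesis
    unfolding argmax_set_def opt.isMax_def[OF inst] Adm_eq[OF inst]
    using int_eq by auto
qed

theorem lemmaA2:
  fixes M :: "'a measure" and B :: "real \<Rightarrow> 'a \<Rightarrow> real"
    and \<mu> r \<sigma> \<tau> \<alpha> k \<gamma> :: real
  defines "\<phi> \<equiv> (\<mu> - r) / \<sigma>"
  assumes "std_brownian_motion M B"
    and "complete_measure M"
    and "\<sigma> > 0" and "\<phi> \<noteq> 0"
    and "\<tau> > 0" and "0 < \<alpha>" and "\<alpha> < 1" and "k \<ge> 0" and "\<gamma> > 0"
  shows "(\<forall>\<theta>1 \<theta>2 h1 h2. theta_low \<alpha> k < \<theta>1 \<and> \<theta>1 \<le> \<theta>2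
            \<and> h1 \<in> Hset M B \<phi> r \<tau> \<alpha> k \<gamma> \<theta>1 \<and> h2 \<in> Hset M B \<phi> r \<tau> \<alpha> k \<gamma> \<theta>2
            \<longrightarrow> h1 \<le> h2)
       \<and> (\<forall>\<theta> h. \<theta> < theta_low \<alpha> k \<and> h \<in> Hset M B \<phi> r \<tau> \<alpha> k \<gamma> \<theta> \<longrightarrow> h = 0)"
proof -
  note bm = assms(2) and phi = assms(5) and tau = assms(6) and a0 = assms(7) and a1 = assms(8)
    and k0 = assms(9) and g0 = assms(10)
  interpret F: Fpar \<alpha> k \<gamma> by unfold_locales (use a0 a1 k0 g0 in auto)
  have FP: "Fpar \<alpha> k \<gamma>" by unfold_locales (use a0 a1 k0 g0 in auto)
  interpret P: prob_space M using bm by (simp add: std_brownian_motion_def)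
  define N where "N = aug_filtration M B \<tau>"
  define Z where "Z = pricing_kernel B \<phi> r \<tau>"
  define C where "C \<theta> = 1 + \<bar>\<theta>\<bar> + k" for \<theta> :: real
  define D where "D \<theta> = 1 + \<bar>\<theta>\<bar> + k * \<gamma> powr \<alpha>" for \<theta> :: real
  have inst: "opt (F.Fc \<theta>) \<alpha> (C \<theta>) M N Z (D \<theta>)" for \<theta>
    unfolding N_def Z_def C_def D_def by (rule opt_inst[OF bm tau phi a0 a1 k0 g0])
  have am: "Y \<in> argmax_set M B \<phi> r \<tau> \<alpha> k \<gamma> \<theta> \<longleftrightarrow> opt.isMax (F.Fc \<theta>) M N Z Y" for Y \<theta>
    unfolding N_def Z_def by (rule argmax_eq[OF inst[unfolded N_def Z_def] FP])
  have AdmI: "opt.Adm M N Z = opt.Adm M N Z" ..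
  have AdmC: "opt.isMax (F.Fc \<theta>) M N Z Y \<Longrightarrow> Y \<in> opt.Adm M N Z" for \<theta> Y
    using opt.isMax_def[OF inst[of \<theta>]] by simp
  have Ymeas: "Y \<in> opt.Adm M N Z \<Longrightarrow> Y \<in> borel_measurable M" for Y
    using opt.measN[OF inst[of 0]] by (auto simp: opt.Adm_def[OF inst[of 0]])
  have Ynn: "Y \<in> opt.Adm M N Z \<Longrightarrow> \<omega> \<in> space M \<Longrightarrow> 0 \<le> Y \<omega>" for Y \<omega>
    by (auto simp: opt.Adm_def[OF inst[of 0]])
  have Ypint: "Y \<in> opt.Adm M N Z \<Longrightarrow> integrable M (\<lambda>\<omega>. Y \<omega> powr \<alpha>)" for Y
    by (rule opt.Adm_int(1)[OF inst[of 0]])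
  have YFint: "Y \<in> opt.Adm M N Z \<Longrightarrow> integrable M (\<lambda>\<omega>. F.Fc \<theta> (Y \<omega>))" for Y \<theta>
    by (rule opt.Adm_int(2)[OF inst[of \<theta>]])
  have split: "(\<integral>\<omega>. F.Fc \<theta> (Y \<omega>) \<partial>M) = (\<integral>\<omega>. F.Fc 0 (Y \<omega>) \<partial>M) + \<theta> * (\<integral>\<omega>. Y \<omega> powr \<alpha> \<partial>M)"
    if Y: "Y \<in> opt.Adm M N Z" for Y \<theta>
  proof -
    have "(\<integral>\<omega>. F.Fc \<theta> (Y \<omega>) \<partial>M) = (\<integral>\<omega>. F.Fc 0 (Y \<omega>) + \<theta> * Y \<omega> powr \<alpha> \<partial>M)"
      using Ynn[OF Y] by (intro Bochner_Integration.integral_cong) (auto simp: F.Fc_def)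
    also have "\<dots> = (\<integral>\<omega>. F.Fc 0 (Y \<omega>) \<partial>M) + \<theta> * (\<integral>\<omega>. Y \<omega> powr \<alpha> \<partial>M)"
      using YFint[OF Y, of 0] Ypint[OF Y] by simp
    finally show ?thesis .
  qed
  show ?thesis
  proof (intro conjI allI impI)
    fix \<theta>1 \<theta>2 h1 h2
    assume H: "theta_low \<alpha> k < \<theta>1 \<and> \<theta>1 \<le> \<theta>2 \<and> h1 \<in> Hset M B \<phi> r \<tau> \<alpha> k \<gamma> \<theta>1 \<and> h2 \<in> Hset M B \<phi> r \<tau> \<alpha> k \<gamma> \<theta>2"
    obtain Y1 where Y1: "opt.isMax (F.Fc \<theta>1) M N Z Y1" "h1 = (\<integral>\<omega>. Y1 \<omega> powr \<alpha> \<partial>M)"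
      using H am by (auto simp: Hset_def)
    obtain Y2 where Y2: "opt.isMax (F.Fc \<theta>2) M N Z Y2" "h2 = (\<integral>\<omega>. Y2 \<omega> powr \<alpha> \<partial>M)"
      using H am by (auto simp: Hset_def)
    have A1: "Y1 \<in> opt.Adm M N Z" and A2: "Y2 \<in> opt.Adm M N Z" using AdmC Y1 Y2 by auto
    show "h1 \<le> h2"
    proof (cases "\<theta>1 = \<theta>2")
      case True
      have th: "\<theta>1 > - F.cl" using H F.theta_low_eq by simp
      have "AE \<omega> in M. Y1 \<omega> = Y2 \<omega>"
      proof (rule opt.maximizers_AE_eq[OF inst[of \<theta>1]])
        show "opt.isMax (F.Fc \<theta>1) M N Z Y1" by (rule Y1(1))
        show "opt.isMax (F.Fc \<theta>1) M N Z Y2" using Y2(1) True by simp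
        show "\<And>a b. 0 \<le> a \<Longrightarrow> 0 \<le> b \<Longrightarrow> \<forall>x\<ge>0. F.Fc \<theta>1 x \<le> F.Fc \<theta>1 a \<Longrightarrow> \<forall>x\<ge>0. F.Fc \<theta>1 x \<le> F.Fc \<theta>1 b \<Longrightarrow> a = b"
          using F.Fc_uniq[OF th] by blast
      qed
      then have ae: "AE \<omega> in M. Y1 \<omega> powr \<alpha> = Y2 \<omega> powr \<alpha>" by (rule eventually_mono) simp
      have m1: "(\<lambda>\<omega>. Y1 \<omega> powr \<alpha>) \<in> borel_measurable M" using Ymeas[OF A1] by measurable
      have m2: "(\<lambda>\<omega>. Y2 \<omega> powr \<alpha>) \<in> borel_measurable M" using Ymeas[OF A2] by measurable
      have "(\<integral>\<omega>. Y1 \<omega> powr \<alpha> \<partial>M) = (\<integral>\<omega>. Y2 \<omega> powr \<alpha> \<partial>M)"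
        by (rule integral_cong_AE[OF m1 m2 ae])
      then show ?thesis using Y1 Y2 by simp
    next
      case False
      then have lt: "\<theta>1 < \<theta>2" using H by simp
      have m1: "(\<integral>\<omega>. F.Fc \<theta>1 (Y2 \<omega>) \<partial>M) \<le> (\<integral>\<omega>. F.Fc \<theta>1 (Y1 \<omega>) \<partial>M)"
        using Y1(1) A2 by (auto simp: opt.isMax_def[OF inst[of \<theta>1]])
      have m2: "(\<integral>\<omega>. F.Fc \<theta>2 (Y1 \<omega>) \<partial>M) \<le> (\<integral>\<omega>. F.Fc \<theta>2 (Y2 \<omega>) \<partial>M)"
        using Y2(1) A1 by (auto simp: opt.isMax_def[OF inst[of \<theta>2]])
      define a1 where "a1 = (\<integral>\<omega>. F.Fc 0 (Y1 \<omega>) \<partial>M)"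
      define a2 where "a2 = (\<integral>\<omega>. F.Fc 0 (Y2 \<omega>) \<partial>M)"
      have e1: "a2 + \<theta>1 * h2 \<le> a1 + \<theta>1 * h1"
        using m1 split[OF A1, of \<theta>1] split[OF A2, of \<theta>1] Y1(2) Y2(2) by (simp add: a1_def a2_def)
      have e2: "a1 + \<theta>2 * h1 \<le> a2 + \<theta>2 * h2"
        using m2 split[OF A1, of \<theta>2] split[OF A2, of \<theta>2] Y1(2) Y2(2) by (simp add: a1_def a2_def)
      have "(\<theta>2 - \<theta>1) * (h1 - h2) \<le> 0" using e1 e2 by (simp add: algebra_simps)
      then have "h1 - h2 \<le> 0" using lt by (simp add: mult_le_0_iff)
      then show ?thesis by simp
    qed
  next
    fix \<theta> h
    assume H: "\<theta> < theta_low \<alpha> k \<and> h \<in> Hset M B \<phi> r \<tau> \<alpha> k \<gamma> \<theta>"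
    obtain Y where Y: "opt.isMax (F.Fc \<theta>) M N Z Y" "h = (\<integral>\<omega>. Y \<omega> powr \<alpha> \<partial>M)"
      using H am by (auto simp: Hset_def)
    have A: "Y \<in> opt.Adm M N Z" using AdmC Y by auto
    have th: "\<theta> + F.cl < 0" using H F.theta_low_eq by simp
    have Z0: "(\<lambda>\<omega>. 0) \<in> opt.Adm M N Z"
      by (simp add: opt.Adm_def[OF inst[of 0]])
    have "\<forall>Y'\<in>opt.Adm M N Z. (\<integral>\<omega>. F.Fc \<theta> (Y' \<omega>) \<partial>M) \<le> (\<integral>\<omega>. F.Fc \<theta> (Y \<omega>) \<partial>M)"
      using Y(1) unfolding opt.isMax_def[OF inst[of \<theta>]] by blast
    from bspec[OF this Z0] have lo: "F.Fc \<theta> 0 \<le> (\<integral>\<omega>. F.Fc \<theta> (Y \<omega>) \<partial>M)" by (simp add: P.prob_space)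
    have "(\<integral>\<omega>. F.Fc \<theta> (Y \<omega>) \<partial>M) \<le> (\<integral>\<omega>. F.Fc \<theta> 0 + (\<theta> + F.cl) * Y \<omega> powr \<alpha> \<partial>M)"
      using YFint[OF A] Ypint[OF A] Ynn[OF A] F.Fc_part2
      by (intro integral_mono) auto
    also have "\<dots> = F.Fc \<theta> 0 + (\<theta> + F.cl) * h"
      using Ypint[OF A] Y(2) by (simp add: P.prob_space)
    finally have "0 \<le> (\<theta> + F.cl) * h" using lo by simp
    then have "h \<le> 0" using th by (simp add: zero_le_mult_iff)
    moreover have "0 \<le> h" unfolding Y(2) by (intro integral_nonneg_AE AE_I2) simp
    ultimately show "h = 0" by simp
  qed
qed

end
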